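(* Let $\lambda\in\{1,-1\}$, $0<T<\infty$, and let $q(x,t)$ be a sufficiently smooth solution of the NLS equation $iq_t+q_{xx}-2\lambda|q|^2q=0$ on $0<x<\infty$, $0<t<T$, decaying sufficiently fast as $x\to\infty$, with compatible initial and boundary data ($q(0,0)=q_0(0)$). Let $\Phi_1,\Phi_2$, $a,b$, $F$ and $c$ be as in the context, so that the global relation $$c(t,k)=\Phi_1(t,k)+\frac{b(k)}{a(k)}\overline{\Phi_2(t,\bar k)}\,e^{-4ik^2t},\qquad \operatorname{Im}k\ge 0,$$ holds. Then $$c(t,k)=\frac{\Phi_1^{(1)}(t)}{k}+\frac{\Phi_1^{(2)}(t)}{k^2}+O\Big(\frac1{k^3}\Big),\qquad k\to\infty,\ k\in D_1,$$ where $\Phi_1^{(1)}(t)=\frac{g_0(t)}{2i}$ and $\Phi_1^{(2)}(t)=\frac{g_1(t)}{4}-\frac{ig_0(t)}{2}\cdot\frac{\lambda}{2}\int_0^t\big(\bar g_0g_1-g_0\bar g_1\big)(\tau)\,d\tau$ are the coefficients of the large-$k$ expansion $\Phi_1(t,k)=\frac{\Phi_1^{(1)}(t)}{k}+\frac{\Phi_1^{(2)}(t)}{k^2}+O(k^{-3})+O(e^{-4ik^2t}/k)$ valid for $k\in D_2\cup D_4$.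
   Context: $g_0(t)=q(0,t)$, $g_1(t)=q_x(0,t)$, $q_0(x)=q(x,0)$. $\sigma_3=\mathrm{diag}(1,-1)$, $Q(x,t)=\begin{pmatrix}0&q\\ \lambda\bar q&0\end{pmatrix}$. The quadrants are $D_1=\{\operatorname{Re}k>0,\operatorname{Im}k>0\}$, $D_2=\{\operatorname{Re}k<0,\operatorname{Im}k>0\}$, $D_3=\{\operatorname{Re}k<0,\operatorname{Im}k<0\}$, $D_4=\{\operatorname{Re}k>0,\operatorname{Im}k<0\}$. The functions $\Phi_1(t,k),\Phi_2(t,k)$ ($0<t<T$, $k\in\mathbb C$) are the unique solution of $\Phi_1(t,k)=\int_0^t e^{4ik^2(t'-t)}[-i\lambda|g_0|^2\Phi_1+(2kg_0+ig_1)\Phi_2](t',k)\,dt'$, $\Phi_2(t,k)=1+\lambda\int_0^t[(2k\bar g_0-i\bar g_1)\Phi_1+i|g_0|^2\Phi_2](t',k)\,dt'$. For each $t$, let $\mu_3(x,t,k)$ be the $2\times2$ solution of $\mu_3(x,t,k)=I-\int_x^\infty e^{-ik(x-\xi)\hat\sigma_3}(Q\mu_3)(\xi,t,k)\,d\xi$, where $e^{s\hat\sigma_3}M=e^{s\sigma_3}Me^{-s\sigma_3}$; its first column is analytic in $\operatorname{Im}k<0$ and its second column in $\operatorname{Im}k>0$. Let $\Psi(x,k)=\mu_3(x,0,k)$, and let $a(k)=\Psi_{22}(0,k)$, $b(k)=\Psi_{12}(0,k)$ for $\operatorname{Im}k\ge0$. Let $F(t,k)=\mu_3(0,t,k)$;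 its second column is analytic and bounded in $\operatorname{Im}k>0$ with $F=I+O(1/k)$ as $k\to\infty$. Define $c(t,k)=F_{12}(t,k)/a(k)$ for $\operatorname{Im}k\ge0$. *)

theory Defs
  imports "HOL-Analysis.Analysis"
begin

definition px :: "(real \<Rightarrow> real \<Rightarrow> complex) \<Rightarrow> real \<Rightarrow> real \<Rightarrow> complex" where
  "px f x t = vector_derivative (\<lambda>y. f y t) (at x within {0..})"

definition pt :: "real \<Rightarrow> (real \<Rightarrow> real \<Rightarrow> complex) \<Rightarrow> real \<Rightarrow> real \<Rightarrow> complex" where
  "pt T f x t = vector_derivative (\<lambda>s. f x s) (at t within {0..T})"

definition smooth_decaying :: "real \<Rightarrow> (real \<Rightarrow> real \<Rightarrow> complex) \<Rightarrow> bool" where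
  "smooth_decaying T q \<longleftrightarrow>
     (\<forall>m n. let f = (px ^^ m) ((pt T ^^ n) q) in
        (\<forall>x\<ge>0. \<forall>t\<in>{0..T}.
            ((\<lambda>y. f y t) has_vector_derivative px f x t) (at x within {0..}) \<and>
            ((\<lambda>s. f x s) has_vector_derivative pt T f x t) (at t within {0..T})) \<and>
        continuous_on ({0..} \<times> {0..T}) (\<lambda>(x, t). f x t) \<and>
        (\<forall>N::nat. \<exists>C. \<forall>x\<ge>0. \<forall>t\<in>{0..T}. (1 + x) ^ N * norm (f x t) \<le> C))"

definition solves_NLS :: "real \<Rightarrow> real \<Rightarrow> (real \<Rightarrow> real \<Rightarrow> complex) \<Rightarrow> bool" where
  "solves_NLS lam T q \<longleftrightarrow>
     (\<forall>x>0. \<forall>t\<in>{0<..<T}.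
        \<i> * pt T q x t + px (px q) x t
          - 2 * complex_of_real lam * complex_of_real ((norm (q x t))\<^sup>2) * q x t = 0)"

definition g0 :: "(real \<Rightarrow> real \<Rightarrow> complex) \<Rightarrow> real \<Rightarrow> complex" where
  "g0 q t = q 0 t"

definition g1 :: "(real \<Rightarrow> real \<Rightarrow> complex) \<Rightarrow> real \<Rightarrow> complex" where
  "g1 q t = px q 0 t"

text \<open>(Phi1, Phi2) solve the t-part Volterra system (continuous solution, unique).\<close>

definition solves_Phi ::
  "real \<Rightarrow> real \<Rightarrow> (real \<Rightarrow> real \<Rightarrow> complex) \<Rightarrow>
   (real \<Rightarrow> complex \<Rightarrow> complex) \<Rightarrow> (real \<Rightarrow> complex \<Rightarrow> complex) \<Rightarrow> bool" where
  "solves_Phi lam T q Phi1 Phi2 \<longleftrightarrow>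
     (\<forall>k. continuous_on {0..T} (\<lambda>t. Phi1 t k) \<and> continuous_on {0..T} (\<lambda>t. Phi2 t k) \<and>
       (\<forall>t\<in>{0..T}.
          Phi1 t k = integral {0..t} (\<lambda>s. exp (4 * \<i> * k\<^sup>2 * complex_of_real (s - t)) *
              (- \<i> * complex_of_real lam * complex_of_real ((norm (g0 q s))\<^sup>2) * Phi1 s k
               + (2 * k * g0 q s + \<i> * g1 q s) * Phi2 s k)) \<and>
          Phi2 t k = 1 + complex_of_real lam * integral {0..t} (\<lambda>s.
               (2 * k * cnj (g0 q s) - \<i> * cnj (g1 q s)) * Phi1 s k
               + \<i> * complex_of_real ((norm (g0 q s))\<^sup>2) * Phi2 s k)))"

text \<open>Second column (M12, M22) of mu_3(x,t,k), for Im k \<ge> 0: the bounded solution of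
  mu_3 = I - int_x^oo e^{-ik(x-xi) hat sigma_3} (Q mu_3)(xi) d xi, written componentwise.\<close>

definition solves_mu3_col2 ::
  "real \<Rightarrow> real \<Rightarrow> (real \<Rightarrow> real \<Rightarrow> complex) \<Rightarrow>
   (real \<Rightarrow> real \<Rightarrow> complex \<Rightarrow> complex) \<Rightarrow> (real \<Rightarrow> real \<Rightarrow> complex \<Rightarrow> complex) \<Rightarrow> bool" where
  "solves_mu3_col2 lam T q M12 M22 \<longleftrightarrow>
     (\<forall>t\<in>{0..T}. \<forall>k. Im k \<ge> 0 \<longrightarrow>
        (\<exists>B. \<forall>x\<ge>0. norm (M12 x t k) \<le> B \<and> norm (M22 x t k) \<le> B) \<and>
        (\<forall>x\<ge>0.
          ((\<lambda>\<xi>. exp (- \<i> * k * complex_of_real (x - \<xi>)) * q \<xi> t * M22 \<xi> t k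
                  * exp (- \<i> * k * complex_of_real (x - \<xi>)))
             has_integral (- M12 x t k)) {x..} \<and>
          ((\<lambda>\<xi>. complex_of_real lam * cnj (q \<xi> t) * M12 \<xi> t k)
             has_integral (1 - M22 x t k)) {x..}))"

definition D1 :: "complex set" where
  "D1 = {k. Re k > 0 \<and> Im k > 0}"

end

theory Submission
  imports Defs
begin


lemma w_has_integral:
  fixes a :: real assumes a: "a \<ge> 0"
  shows "((\<lambda>x. 1 / (1 + x)\<^sup>2) has_integral 1 / (1 + a)) {a..}"
proof (rule has_integral_to_inf)
  show "(\<lambda>x. 1 / (1 + x)\<^sup>2) integrable_on {a..y}" for y
    using a by (intro integrable_continuous_interval continuous_intros) auto
  have "((\<lambda>x. 1 / (1 + x)\<^sup>2) has_integral ((- 1/(1+y)) - (-1/(1+a)))) {a..y}" if "y \<ge> a" for y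
    using that a
    by (intro fundamental_theorem_of_calculus)
       (auto intro!: derivative_eq_intros simp: power2_eq_square divide_simps
             simp flip: has_real_derivative_iff_has_vector_derivative)
  then have "integral {a..y} (\<lambda>x. 1 / (1 + x)\<^sup>2) = 1/(1+a) - 1/(1+y)" if "y \<ge> a" for y
    using that by (simp add: integral_unique)
  then have "\<forall>\<^sub>F y in at_top. integral {a..y} (\<lambda>x. 1 / (1 + x)\<^sup>2) = 1/(1+a) - 1/(1+y)"
    by (intro eventually_at_top_linorderI) 
  moreover have "((\<lambda>y::real. 1/(1+a) - 1/(1+y)) \<longlongrightarrow> 1/(1+a)) at_top"
    by real_asymp
  ultimately show "((\<lambda>y. integral {a..y} (\<lambda>x. 1 / (1 + x)\<^sup>2)) \<longlongrightarrow> 1/(1+a)) at_top"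
    by (simp add: filterlim_cong tendsto_cong)
qed (use a in auto)


lemma exp_vderiv:
  fixes c :: complex and a :: real
  shows "((\<lambda>x. exp (c * complex_of_real (x - a))) has_vector_derivative
          (c * exp (c * complex_of_real (x - a)))) (at x within S)"
proof -
  have "((\<lambda>z. exp (c * (z - complex_of_real a))) has_field_derivative
          (exp (c * (complex_of_real x - complex_of_real a)) * c)) (at (complex_of_real x))"
    by (auto intro!: derivative_eq_intros)
  from has_vector_derivative_real_field[OF this, of S] show ?thesis
    by (simp add: mult.commute)
qed

lemma norm_exp_upper:
  fixes k :: complex and x a :: real
  assumes "Im k \<ge> 0" "x \<ge> a"
  shows "norm (exp (2 * \<i> * k * complex_of_real (x - a))) \<le> 1"
proof -
  have "Re (2 * \<i> * k * complex_of_real (x - a)) = - 2 * Im k * (x - a)" by simp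
  also have "\<dots> \<le> 0" using assms by (simp add: mult_nonneg_nonneg)
  finally show ?thesis by simp
qed

lemma abs_int_w:
  fixes f :: "real \<Rightarrow> 'b::euclidean_space"
  assumes a: "a \<ge> 0" and cont: "continuous_on {a..} f"
    and bd: "\<And>x. x \<ge> a \<Longrightarrow> norm (f x) \<le> C / (1 + x)\<^sup>2"
  shows "f absolutely_integrable_on {a..}" "f integrable_on {a..}"
    "norm (integral {a..} f) \<le> C / (1 + a)"
proof -
  have gi: "((\<lambda>x. C / (1 + x)\<^sup>2) has_integral C / (1 + a)) {a..}"
    using has_integral_mult_right[OF w_has_integral[OF a], of C] by simp
  show ai: "f absolutely_integrable_on {a..}"
    by (rule measurable_bounded_by_integrable_imp_absolutely_integrable[where g="\<lambda>x. C / (1 + x)\<^sup>2"])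
       (use gi bd cont in \<open>auto intro: continuous_imp_measurable_on_sets_lebesgue\<close>)
  then show fi: "f integrable_on {a..}" using set_lebesgue_integral_eq_integral(1) by blast
  have "norm (integral {a..} f) \<le> integral {a..} (\<lambda>x. C / (1 + x)\<^sup>2)"
    by (rule integral_norm_bound_integral) (use fi gi bd in auto)
  then show "norm (integral {a..} f) \<le> C / (1 + a)" using gi by (simp add: integral_unique)
qed

lemma tail_lim:
  fixes f :: "real \<Rightarrow> complex"
  assumes ai: "f absolutely_integrable_on {a..}"
  shows "(\<lambda>n. integral {a..a + real n} f) \<longlonglongrightarrow> integral {a..} f"
proof -
  have fi: "f integrable_on {a..}" using ai set_lebesgue_integral_eq_integral(1) by blast
  have ni: "(\<lambda>x. norm (f x)) integrable_on {a..}" using ai absolutely_integrable_on_def by blast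
  define g where "g n x = (if x \<in> {a..a + real n} then f x else 0)" for n x
  have gint: "(g n has_integral integral {a..a + real n} f) {a..}" for n
    unfolding g_def
    by (subst has_integral_restrict) (auto intro!: integrable_integral integrable_on_subinterval[OF fi])
  have "(\<lambda>n. integral {a..} (g n)) \<longlonglongrightarrow> integral {a..} f"
  proof (rule dominated_convergence(2)[OF _ ni])
    show "g n integrable_on {a..}" for n using gint by blast
    show "norm (g n x) \<le> norm (f x)" if "x \<in> {a..}" for n x by (simp add: g_def)
    show "(\<lambda>n. g n x) \<longlonglongrightarrow> f x" if "x \<in> {a..}" for x
    proof (rule tendsto_eventually)
      obtain N :: nat where "real N \<ge> x - a" using real_arch_simple by blast
      then have "\<forall>n\<ge>N. g n x = f x" using that by (auto simp: g_def)
      then show "\<forall>\<^sub>F n in sequentially. g n x = f x" using eventually_sequentially by blast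
    qed
  qed
  moreover have "integral {a..} (g n) = integral {a..a + real n} f" for n
    using gint by (rule integral_unique)
  ultimately show ?thesis by simp
qed


lemma norm_mult_le1:
  fixes a b :: complex
  assumes "norm a \<le> 1" "norm b \<le> B" shows "norm (a * b) \<le> B"
proof -
  have "norm (a * b) = norm a * norm b" by (simp add: norm_mult)
  also have "\<dots> \<le> 1 * norm b" by (intro mult_right_mono assms) auto
  finally show ?thesis using assms by simp
qed

lemma ibp:
  fixes h h' :: "real \<Rightarrow> complex" and k :: complex
  assumes a: "a \<ge> 0" and k: "Im k \<ge> 0" "k \<noteq> 0"
    and der: "\<And>x. x \<ge> a \<Longrightarrow> (h has_vector_derivative h' x) (at x within {a..})"
    and cont': "continuous_on {a..} h'"
    and bh: "\<And>x. x \<ge> a \<Longrightarrow> norm (h x) \<le> C / (1 + x)\<^sup>2"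
    and bh': "\<And>x. x \<ge> a \<Longrightarrow> norm (h' x) \<le> C' / (1 + x)\<^sup>2"
  shows "((\<lambda>x. exp (2 * \<i> * k * complex_of_real (x - a)) * h x) has_integral
           (- h a / (2 * \<i> * k) - integral {a..} (\<lambda>x. exp (2 * \<i> * k * complex_of_real (x - a)) * h' x) / (2 * \<i> * k))) {a..}"
proof -
  define c where "c = 2 * \<i> * k"
  have c0: "c \<noteq> 0" using k by (simp add: c_def)
  define E where "E x = exp (c * complex_of_real (x - a))" for x
  have E1: "norm (E x) \<le> 1" if "x \<ge> a" for x
    using norm_exp_upper[OF k(1) that] by (simp add: E_def c_def)
  have Ed: "(E has_vector_derivative c * E x) (at x within S)" for x S
    unfolding E_def by (rule exp_vderiv)
  have contE: "continuous_on S E" for S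
    unfolding E_def by (intro continuous_intros)
  have conth: "continuous_on {a..} h"
    using der by (meson atLeast_iff continuous_on_eq_continuous_within has_vector_derivative_continuous)
  define g where "g x = E x * h x + E x * h' x / c" for x
  define \<phi> where "\<phi> x = E x * h x / c" for x
  have gd: "(\<phi> has_vector_derivative g x) (at x within {a..})" if "x \<ge> a" for x
    unfolding \<phi>_def g_def using der[OF that] Ed[of x "{a..}"]
    by (auto intro!: derivative_eq_intros simp: c0 field_simps)
  have Eh'_ai: "(\<lambda>x. E x * h' x) absolutely_integrable_on {a..}"
    and Eh'_bd: "norm (integral {a..} (\<lambda>x. E x * h' x)) \<le> C' / (1 + a)"
  proof -
    have "norm (E x * h' x) \<le> C' / (1 + x)\<^sup>2" if "x \<ge> a" for x
      using norm_mult_le1[OF E1[OF that] bh'[OF that]] .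
    then show "(\<lambda>x. E x * h' x) absolutely_integrable_on {a..}"
      "norm (integral {a..} (\<lambda>x. E x * h' x)) \<le> C' / (1 + a)"
      using abs_int_w[OF a, of "\<lambda>x. E x * h' x" C'] cont' contE by (auto intro!: continuous_intros)
  qed
  have Eh'_i: "(\<lambda>x. E x * h' x) integrable_on {a..}"
    using Eh'_ai set_lebesgue_integral_eq_integral(1) by blast
  have gbd: "norm (g x) \<le> C / (1 + x)\<^sup>2 + C' / (1 + x)\<^sup>2 / norm c" if "x \<ge> a" for x
  proof -
    have "norm (g x) \<le> norm (E x * h x) + norm (E x * h' x / c)"
      unfolding g_def by (rule norm_triangle_ineq)
    also have "norm (E x * h x) \<le> C / (1 + x)\<^sup>2"
      using norm_mult_le1[OF E1[OF that] bh[OF that]] .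
    also have "norm (E x * h' x / c) \<le> C' / (1 + x)\<^sup>2 / norm c"
      using divide_right_mono[OF norm_mult_le1[OF E1[OF that] bh'[OF that]], of "norm c"]
      by (simp only: norm_divide) simp
    finally show ?thesis by simp
  qed
  have Hi: "(\<lambda>x. C / (1 + x)\<^sup>2 + C' / (1 + x)\<^sup>2 / norm c) integrable_on {a..}"
    using has_integral_add[OF has_integral_mult_right[OF w_has_integral[OF a], of C]
        has_integral_mult_right[OF w_has_integral[OF a], of "C' / norm c"]]
    by (auto simp: integrable_on_def mult.commute)
  define gn where "gn n x = (if x \<in> {a..a + real n} then g x else 0)" for n x
  have gn_int: "(gn n has_integral (\<phi> (a + real n) - \<phi> a)) {a..}" for n
  proof -
    have "(g has_integral (\<phi> (a + real n) - \<phi> a)) {a..a + real n}"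
      by (rule fundamental_theorem_of_calculus)
         (auto intro: has_vector_derivative_within_subset[OF gd])
    then show ?thesis unfolding gn_def by (subst has_integral_restrict) auto
  qed
  have phi_lim: "(\<lambda>n. \<phi> (a + real n) - \<phi> a) \<longlonglongrightarrow> - \<phi> a"
  proof -
    have "(\<lambda>n. \<phi> (a + real n)) \<longlonglongrightarrow> 0"
    proof (rule Lim_null_comparison)
      show "\<forall>\<^sub>F n in sequentially. norm (\<phi> (a + real n)) \<le> C / norm c * (1 / (1 + (a + real n))\<^sup>2)"
      proof (intro always_eventually allI)
        fix n
        have x: "a + real n \<ge> a" by simp
        show "norm (\<phi> (a + real n)) \<le> C / norm c * (1 / (1 + (a + real n))\<^sup>2)"
          unfolding \<phi>_def using divide_right_mono[OF norm_mult_le1[OF E1[OF x] bh[OF x]], of "norm c"]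
          by (simp only: norm_divide) (simp add: mult.commute)
      qed
      have "(\<lambda>n. 1 / (1 + (a + real n))\<^sup>2) \<longlonglongrightarrow> 0" using a by real_asymp
      then show "(\<lambda>n. C / norm c * (1 / (1 + (a + real n))\<^sup>2)) \<longlonglongrightarrow> 0"
        by (metis mult_zero_right tendsto_mult_left)
    qed
    then show ?thesis by (intro tendsto_eq_intros) auto
  qed
  have g_int: "(g has_integral - \<phi> a) {a..}"
  proof (rule has_integral_dominated_convergence[OF gn_int Hi _ _ phi_lim])
    show "\<forall>x\<in>{a..}. norm (gn n x) \<le> C / (1 + x)\<^sup>2 + C' / (1 + x)\<^sup>2 / norm c" for n
    proof
      fix x :: real assume "x \<in> {a..}"
      then have "norm (g x) \<le> C / (1 + x)\<^sup>2 + C' / (1 + x)\<^sup>2 / norm c" using gbd by auto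
      moreover then have "0 \<le> C / (1 + x)\<^sup>2 + C' / (1 + x)\<^sup>2 / norm c" using norm_ge_zero order_trans by blast
      ultimately show "norm (gn n x) \<le> C / (1 + x)\<^sup>2 + C' / (1 + x)\<^sup>2 / norm c"
        by (auto simp: gn_def)
    qed
    show "\<forall>x\<in>{a..}. (\<lambda>n. gn n x) \<longlonglongrightarrow> g x"
    proof
      fix x :: real assume "x \<in> {a..}"
      obtain N :: nat where "real N \<ge> x - a" using real_arch_simple by blast
      then have "\<forall>n\<ge>N. gn n x = g x" using \<open>x \<in> {a..}\<close> by (auto simp: gn_def)
      then show "(\<lambda>n. gn n x) \<longlonglongrightarrow> g x"
        by (intro tendsto_eventually) (auto simp: eventually_sequentially)
    qed
  qed
  have "((\<lambda>x. g x - E x * h' x / c) has_integral (- \<phi> a - integral {a..} (\<lambda>x. E x * h' x) / c)) {a..}"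
    by (intro has_integral_diff g_int has_integral_divide integrable_integral Eh'_i)
  moreover have "g x - E x * h' x / c = E x * h x" for x by (simp add: g_def)
  moreover have "\<phi> a = h a / c" by (simp add: \<phi>_def E_def)
  ultimately show ?thesis by (simp add: E_def c_def)
qed


lemma within_ext:
  fixes x :: real assumes "x \<ge> 0"
  shows "at x within {0..x+1} = at x within {0..}"
  by (rule at_within_nhd[where S="{..<x+1}"]) auto

lemma cont_ext:
  fixes F :: "real \<Rightarrow> 'a::topological_space"
  assumes "\<And>b. b \<ge> 0 \<Longrightarrow> continuous_on {0..b} F"
  shows "continuous_on {0..} F"
proof -
  have "continuous (at x within {0..}) F" if "x \<ge> 0" for x
  proof -
    have "continuous (at x within {0..x+1}) F"
      using assms[of "x+1"] that by (simp add: continuous_on_eq_continuous_within)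
    then show ?thesis using within_ext[OF that] by simp
  qed
  then show ?thesis by (simp add: continuous_on_eq_continuous_within)
qed

lemma tail_split:
  fixes g :: "real \<Rightarrow> 'b::banach"
  assumes "g integrable_on {a..}" "g integrable_on {x..}" "a \<le> x"
  shows "integral {a..} g = integral {a..x} g + integral {x..} g"
proof -
  have i1: "g integrable_on {a..x}" by (rule integrable_on_subinterval[OF assms(1)]) (use assms in auto)
  have "(g has_integral (integral {a..x} g + integral {x..} g)) ({a..x} \<union> {x..})"
    by (rule has_integral_Un) (use i1 assms in \<open>auto intro: negligible_subset[of "{x}"]\<close>)
  moreover have "{a..x} \<union> {x..} = {a..}" using assms by auto
  ultimately show ?thesis by (simp add: integral_unique)
qed

lemma tail_eq:
  fixes g :: "real \<Rightarrow> 'b::banach"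
  assumes "\<And>x. x \<ge> 0 \<Longrightarrow> g integrable_on {x..}" "x \<ge> 0"
  shows "integral {x..} g = integral {0..} g - integral {0..x} g"
  using tail_split[OF assms(1)[of 0] assms(1)[OF assms(2)] assms(2)] by simp

lemma tail_cont:
  fixes g :: "real \<Rightarrow> 'b::banach"
  assumes "\<And>x. x \<ge> 0 \<Longrightarrow> g integrable_on {x..}"
  shows "continuous_on {0..} (\<lambda>x. integral {x..} g)"
proof -
  have "continuous_on {0..} (\<lambda>x. integral {0..} g - integral {0..x} g)"
  proof (intro continuous_intros cont_ext)
    fix b :: real assume "b \<ge> 0"
    show "continuous_on {0..b} (\<lambda>x. integral {0..x} g)"
      by (rule indefinite_integral_continuous_1, rule integrable_on_subinterval[OF assms[of 0]]) auto
  qed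
  moreover have "integral {0..} g - integral {0..x} g = integral {x..} g" if "x \<in> {0..}" for x
    using tail_eq[OF assms, of x] that by simp
  ultimately show ?thesis
    by (rule continuous_on_eq)
qed

lemma tail_deriv:
  fixes g :: "real \<Rightarrow> 'b::banach"
  assumes "\<And>x. x \<ge> 0 \<Longrightarrow> g integrable_on {x..}" "continuous_on {0..} g" "x \<ge> 0"
  shows "((\<lambda>x. integral {x..} g) has_vector_derivative - g x) (at x within {0..})"
proof -
  have "((\<lambda>y. integral {0..y} g) has_vector_derivative g x) (at x within {0..x+1})"
    by (rule integral_has_vector_derivative) (use assms in \<open>auto intro: continuous_on_subset\<close>)
  then have "((\<lambda>y. integral {0..y} g) has_vector_derivative g x) (at x within {0..})"
    using within_ext[OF assms(3)] by simp
  then have d: "((\<lambda>y. integral {0..} g - integral {0..y} g) has_vector_derivative - g x) (at x within {0..})"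
    by (auto intro!: derivative_eq_intros)
  have e: "integral {y..} g = integral {0..} g - integral {0..y} g" if "y \<in> {0..}" for y
    using tail_eq[OF assms(1), of y] that by simp
  have x: "x \<in> {0..}" using assms(3) by simp
  show ?thesis
    by (rule has_vector_derivative_transform[OF x e d])
qed


lemma nonneg_from_w:
  fixes x C :: real assumes "0 \<le> x" "0 \<le> C / (1 + x)\<^sup>2" shows "0 \<le> C"
proof -
  have p: "(1 + x)\<^sup>2 > 0" using assms by simp
  have "C = (C / (1 + x)\<^sup>2) * (1 + x)\<^sup>2" using p by simp
  also have "\<dots> \<ge> 0" by (rule mult_nonneg_nonneg) (use assms p in auto)
  finally show ?thesis .
qed

lemma w_le: "0 \<le> x \<Longrightarrow> C \<ge> 0 \<Longrightarrow> C / (1 + x)\<^sup>2 \<le> (C::real)"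
proof -
  assume x: "0 \<le> x" and C: "C \<ge> 0"
  have p: "(1 + x)\<^sup>2 \<ge> 1" using x by (simp add: one_le_power)
  have "C * 1 \<le> C * (1 + x)\<^sup>2" by (rule mult_left_mono[OF p C])
  moreover have "(1 + x)\<^sup>2 > 0" using x by simp
  ultimately show ?thesis by (simp add: pos_divide_le_eq)
qed

lemma w_le1: "0 \<le> x \<Longrightarrow> C \<ge> 0 \<Longrightarrow> C / (1 + x) \<le> (C::real)"
proof -
  assume x: "0 \<le> x" and C: "C \<ge> 0"
  have "C * 1 \<le> C * (1 + x)" by (rule mult_left_mono) (use x C in auto)
  moreover have "1 + x > 0" using x by simp
  ultimately show ?thesis by (simp add: pos_divide_le_eq)
qed

lemma ibp_err:
  fixes h h' :: "real \<Rightarrow> complex" and k :: complex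
  assumes a: "a \<ge> 0" and k: "Im k \<ge> 0" "k \<noteq> 0"
    and der: "\<And>x. x \<ge> a \<Longrightarrow> (h has_vector_derivative h' x) (at x within {a..})"
    and cont': "continuous_on {a..} h'"
    and bh: "\<And>x. x \<ge> a \<Longrightarrow> norm (h x) \<le> C / (1 + x)\<^sup>2"
    and bh': "\<And>x. x \<ge> a \<Longrightarrow> norm (h' x) \<le> C' / (1 + x)\<^sup>2"
  shows "(\<lambda>x. exp (2 * \<i> * k * complex_of_real (x - a)) * h x) integrable_on {a..}"
    "norm (integral {a..} (\<lambda>x. exp (2 * \<i> * k * complex_of_real (x - a)) * h x) + h a / (2 * \<i> * k))
       \<le> C' / (2 * norm k)"
proof -
  have I: "((\<lambda>x. exp (2 * \<i> * k * complex_of_real (x - a)) * h x) has_integral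
           (- h a / (2 * \<i> * k) - integral {a..} (\<lambda>x. exp (2 * \<i> * k * complex_of_real (x - a)) * h' x) / (2 * \<i> * k))) {a..}"
    by (rule ibp[OF a k der cont' bh bh'])
  then show "(\<lambda>x. exp (2 * \<i> * k * complex_of_real (x - a)) * h x) integrable_on {a..}"
    by (rule has_integral_integrable)
  have C'0: "C' \<ge> 0"
    by (rule nonneg_from_w[OF a]) (use bh'[of a] norm_ge_zero[of "h' a"] in linarith)
  have bb: "norm (exp (2 * \<i> * k * complex_of_real (x - a)) * h' x) \<le> C' / (1 + x)\<^sup>2" if "x \<ge> a" for x
    by (rule norm_mult_le1[OF norm_exp_upper[OF k(1) that] bh'[OF that]])
  have cc: "continuous_on {a..} (\<lambda>x. exp (2 * \<i> * k * complex_of_real (x - a)) * h' x)"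
    by (intro continuous_intros cont')
  have nb: "norm (integral {a..} (\<lambda>x. exp (2 * \<i> * k * complex_of_real (x - a)) * h' x)) \<le> C' / (1 + a)"
    by (rule abs_int_w(3)[OF a cc bb]) simp
  also have "C' / (1 + a) \<le> C'" using a C'0 by (rule w_le1)
  finally have nb': "norm (integral {a..} (\<lambda>x. exp (2 * \<i> * k * complex_of_real (x - a)) * h' x)) \<le> C'" .
  have "integral {a..} (\<lambda>x. exp (2 * \<i> * k * complex_of_real (x - a)) * h x) + h a / (2 * \<i> * k)
      = - integral {a..} (\<lambda>x. exp (2 * \<i> * k * complex_of_real (x - a)) * h' x) / (2 * \<i> * k)"
    using integral_unique[OF I] by simp
  also have "norm \<dots> \<le> C' / (2 * norm k)"
    using nb' k by (simp add: norm_divide norm_mult divide_right_mono)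
  finally show "norm (integral {a..} (\<lambda>x. exp (2 * \<i> * k * complex_of_real (x - a)) * h x) + h a / (2 * \<i> * k))
       \<le> C' / (2 * norm k)" .
qed

locale prof =
  fixes u u1 u2 u3 :: "real \<Rightarrow> complex" and K lam :: real
  assumes d0: "\<And>x. 0 \<le> x \<Longrightarrow> (u has_vector_derivative u1 x) (at x within {0..})"
    and d1: "\<And>x. 0 \<le> x \<Longrightarrow> (u1 has_vector_derivative u2 x) (at x within {0..})"
    and d2: "\<And>x. 0 \<le> x \<Longrightarrow> (u2 has_vector_derivative u3 x) (at x within {0..})"
    and c3: "continuous_on {0..} u3"
    and b0: "\<And>x. 0 \<le> x \<Longrightarrow> norm (u x) \<le> K / (1 + x)\<^sup>2"
    and b1: "\<And>x. 0 \<le> x \<Longrightarrow> norm (u1 x) \<le> K / (1 + x)\<^sup>2"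
    and b2: "\<And>x. 0 \<le> x \<Longrightarrow> norm (u2 x) \<le> K / (1 + x)\<^sup>2"
    and b3: "\<And>x. 0 \<le> x \<Longrightarrow> norm (u3 x) \<le> K / (1 + x)\<^sup>2"
    and lam: "\<bar>lam\<bar> \<le> 1"
begin

lemma K0: "K \<ge> 0"
proof -
  have "norm (u 0) \<le> K" using b0[of 0] by simp
  then show ?thesis by (rule order_trans[OF norm_ge_zero])
qed

lemma cont_of_der:
  assumes "\<And>x. 0 \<le> x \<Longrightarrow> (f has_vector_derivative f' x) (at x within {0..})"
  shows "continuous_on {0..} f"
  using assms by (meson atLeast_iff continuous_on_eq_continuous_within has_vector_derivative_continuous)

lemma c0: "continuous_on {0..} u" by (rule cont_of_der[OF d0])
lemma c1: "continuous_on {0..} u1" by (rule cont_of_der[OF d1])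
lemma c2: "continuous_on {0..} u2" by (rule cont_of_der[OF d2])

lemma bK0: "0 \<le> x \<Longrightarrow> norm (u x) \<le> K" using b0 w_le K0 order_trans by blast
lemma bK1: "0 \<le> x \<Longrightarrow> norm (u1 x) \<le> K" using b1 w_le K0 order_trans by blast
lemma bK2: "0 \<le> x \<Longrightarrow> norm (u2 x) \<le> K" using b2 w_le K0 order_trans by blast

end


lemma psi_int:
  fixes K x :: real assumes K: "K \<ge> 0" and x: "x \<ge> 0"
  shows "((\<lambda>y. K / (1 + y)\<^sup>2 * exp (2 * K / (1 + y))) has_integral (exp (2 * K / (1 + x)) - 1) / 2) {x..}"
proof (rule has_integral_to_inf)
  show "(\<lambda>y. K / (1 + y)\<^sup>2 * exp (2 * K / (1 + y))) integrable_on {x..z}" for z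
    using x by (intro integrable_continuous_interval continuous_intros) auto
  have "((\<lambda>y. K / (1 + y)\<^sup>2 * exp (2 * K / (1 + y))) has_integral
          ((- exp (2 * K / (1 + z)) / 2) - (- exp (2 * K / (1 + x)) / 2))) {x..z}" if "z \<ge> x" for z
    using that x
    by (intro fundamental_theorem_of_calculus)
       (auto intro!: derivative_eq_intros simp: power2_eq_square divide_simps
             simp flip: has_real_derivative_iff_has_vector_derivative)
  then have "integral {x..z} (\<lambda>y. K / (1 + y)\<^sup>2 * exp (2 * K / (1 + y))) =
      (exp (2 * K / (1 + x)) - exp (2 * K / (1 + z))) / 2" if "z \<ge> x" for z
    using that by (simp add: integral_unique diff_divide_distrib)
  then have ev: "\<forall>\<^sub>F z in at_top. (exp (2 * K / (1 + x)) - exp (2 * K / (1 + z))) / 2 =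
      integral {x..z} (\<lambda>y. K / (1 + y)\<^sup>2 * exp (2 * K / (1 + y)))"
    by (intro eventually_at_top_linorderI) (rule sym)
  have lim: "((\<lambda>z::real. (exp (2 * K / (1 + x)) - exp (2 * K / (1 + z))) / 2) \<longlongrightarrow>
       (exp (2 * K / (1 + x)) - 1) / 2) at_top"
    by real_asymp
  show "((\<lambda>z. integral {x..z} (\<lambda>y. K / (1 + y)\<^sup>2 * exp (2 * K / (1 + y)))) \<longlongrightarrow>
       (exp (2 * K / (1 + x)) - 1) / 2) at_top"
    by (rule Lim_transform_eventually[OF lim ev])
qed (use K x in auto)

lemma exp_shift:
  fixes k :: complex and x y :: real
  shows "exp (2 * \<i> * k * complex_of_real x) * exp (2 * \<i> * k * complex_of_real (y - x))
       = exp (2 * \<i> * k * complex_of_real y)"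
proof -
  have "2 * \<i> * k * complex_of_real x + 2 * \<i> * k * complex_of_real (y - x) = 2 * \<i> * k * complex_of_real y"
    by (simp add: algebra_simps)
  then show ?thesis by (metis mult_exp_exp)
qed

lemma exp_cancel:
  fixes z :: complex shows "exp (- z) * exp z = 1"
  by (simp add: exp_minus_inverse mult.commute)

locale volt = prof +
  fixes k :: complex and m1 m2 :: "real \<Rightarrow> complex" and B :: real
  assumes k: "Im k \<ge> 0" "norm k \<ge> 1"
    and VA: "\<And>x. 0 \<le> x \<Longrightarrow> ((\<lambda>\<xi>. exp (2 * \<i> * k * complex_of_real (\<xi> - x)) * u \<xi> * m2 \<xi>)
                 has_integral - m1 x) {x..}"
    and VB: "\<And>x. 0 \<le> x \<Longrightarrow> ((\<lambda>\<xi>. complex_of_real lam * cnj (u \<xi>) * m1 \<xi>)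
                 has_integral (1 - m2 x)) {x..}"
    and VBd: "\<And>x. 0 \<le> x \<Longrightarrow> norm (m1 x) \<le> B \<and> norm (m2 x) \<le> B"
begin

lemma k0: "k \<noteq> 0" using k by auto

definition "gA \<xi> = exp (2 * \<i> * k * complex_of_real \<xi>) * u \<xi> * m2 \<xi>"
definition "gB \<xi> = complex_of_real lam * cnj (u \<xi>) * m1 \<xi>"

lemma VA': assumes x: "0 \<le> x" shows "(gA has_integral (- exp (2 * \<i> * k * complex_of_real x) * m1 x)) {x..}"
proof -
  have "((\<lambda>\<xi>. exp (2 * \<i> * k * complex_of_real x) * (exp (2 * \<i> * k * complex_of_real (\<xi> - x)) * u \<xi> * m2 \<xi>))
      has_integral exp (2 * \<i> * k * complex_of_real x) * - m1 x) {x..}"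
    by (rule has_integral_mult_right[OF VA[OF x]])
  moreover have "(\<lambda>\<xi>. exp (2 * \<i> * k * complex_of_real x) * (exp (2 * \<i> * k * complex_of_real (\<xi> - x)) * u \<xi> * m2 \<xi>)) = gA"
    by (rule ext) (simp only: gA_def mult.assoc[symmetric] exp_shift)
  ultimately show ?thesis by simp
qed

lemma gA_int: "0 \<le> x \<Longrightarrow> gA integrable_on {x..}"
  using VA' by blast
lemma gB_int: "0 \<le> x \<Longrightarrow> gB integrable_on {x..}"
  using VB unfolding gB_def by blast

lemma m1_eq: assumes x: "0 \<le> x" shows "m1 x = - exp (- 2 * \<i> * k * complex_of_real x) * integral {x..} gA"
proof -
  have "integral {x..} gA = - exp (2 * \<i> * k * complex_of_real x) * m1 x"
    using VA'[OF x] by (rule integral_unique)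
  then have "- exp (- 2 * \<i> * k * complex_of_real x) * integral {x..} gA
      = (exp (- (2 * \<i> * k * complex_of_real x)) * exp (2 * \<i> * k * complex_of_real x)) * m1 x"
    by simp
  then show ?thesis by (simp only: exp_cancel) simp
qed

lemma m2_eq: assumes x: "0 \<le> x" shows "m2 x = 1 - integral {x..} gB"
  using integral_unique[OF VB[OF x]] unfolding gB_def by simp

lemma m1_cont: "continuous_on {0..} m1"
proof -
  have "continuous_on {0..} (\<lambda>x. - exp (- 2 * \<i> * k * complex_of_real x) * integral {x..} gA)"
    by (intro continuous_intros tail_cont gA_int) auto
  then show ?thesis by (rule continuous_on_eq) (simp add: m1_eq)
qed

lemma m2_cont: "continuous_on {0..} m2"
proof -
  have "continuous_on {0..} (\<lambda>x. 1 - integral {x..} gB)"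
    by (intro continuous_intros tail_cont gB_int) auto
  then show ?thesis by (rule continuous_on_eq) (simp add: m2_eq)
qed

lemma gA_cont: "continuous_on {0..} gA"
  unfolding gA_def by (intro continuous_intros c0 m2_cont)
lemma gB_cont: "continuous_on {0..} gB"
  unfolding gB_def by (intro continuous_intros c0 m1_cont)

lemma m2_der: assumes x: "0 \<le> x"
  shows "(m2 has_vector_derivative (complex_of_real lam * cnj (u x) * m1 x)) (at x within {0..})"
proof -
  have "((\<lambda>x. 1 - integral {x..} gB) has_vector_derivative 0 - (- gB x)) (at x within {0..})"
    by (rule has_vector_derivative_diff[OF has_vector_derivative_const tail_deriv[OF gB_int gB_cont x]])
  then have d: "((\<lambda>x. 1 - integral {x..} gB) has_vector_derivative (complex_of_real lam * cnj (u x) * m1 x)) (at x within {0..})"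
    by (simp add: gB_def)
  have e: "m2 y = 1 - integral {y..} gB" if "y \<in> {0..}" for y using m2_eq that by simp
  show ?thesis by (rule has_vector_derivative_transform[OF _ e d]) (use x in simp)
qed

lemma m1_der: assumes x: "0 \<le> x"
  shows "(m1 has_vector_derivative (- 2 * \<i> * k * m1 x + u x * m2 x)) (at x within {0..})"
proof -
  define c where "c = - 2 * \<i> * k"
  have Ed: "((\<lambda>y. exp (c * complex_of_real y)) has_vector_derivative (c * exp (c * complex_of_real x))) (at x within {0..})"
    using exp_vderiv[of c 0 x "{0..}"] by simp
  have Td: "((\<lambda>y. integral {y..} gA) has_vector_derivative - gA x) (at x within {0..})"
    by (rule tail_deriv[OF gA_int gA_cont x])
  have d0: "((\<lambda>y. - (exp (c * complex_of_real y) * integral {y..} gA)) has_vector_derivative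
      - (exp (c * complex_of_real x) * - gA x + c * exp (c * complex_of_real x) * integral {x..} gA)) (at x within {0..})"
    by (rule has_vector_derivative_minus[OF has_vector_derivative_mult[OF Ed Td]])
  have T: "integral {x..} gA = - exp (2 * \<i> * k * complex_of_real x) * m1 x"
    using VA'[OF x] by (rule integral_unique)
  have ee: "exp (c * complex_of_real x) * exp (2 * \<i> * k * complex_of_real x) = 1"
    using exp_cancel[of "2 * \<i> * k * complex_of_real x"] by (simp add: c_def)
  have "- (exp (c * complex_of_real x) * - gA x + c * exp (c * complex_of_real x) * integral {x..} gA)
      = (exp (c * complex_of_real x) * exp (2 * \<i> * k * complex_of_real x)) * (u x * m2 x)
        + c * (exp (c * complex_of_real x) * exp (2 * \<i> * k * complex_of_real x)) * m1 x"
    unfolding T gA_def by (simp add: algebra_simps)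
  also have "\<dots> = - 2 * \<i> * k * m1 x + u x * m2 x" unfolding ee by (simp add: c_def)
  finally have d: "((\<lambda>y. - (exp (c * complex_of_real y) * integral {y..} gA)) has_vector_derivative
      (- 2 * \<i> * k * m1 x + u x * m2 x)) (at x within {0..})" using d0 by simp
  have e: "m1 y = - (exp (c * complex_of_real y) * integral {y..} gA)" if "y \<in> {0..}" for y
    using m1_eq that by (simp add: c_def)
  show ?thesis by (rule has_vector_derivative_transform[OF _ e d]) (use x in simp)
qed

end


lemma div_ge1: "0 \<le> a \<Longrightarrow> 1 \<le> p \<Longrightarrow> a / p \<le> (a::real)"
proof -
  assume a: "0 \<le> a" and p: "1 \<le> p"
  have "a * 1 \<le> a * p" by (rule mult_left_mono[OF p a])
  then show ?thesis using p by (simp add: pos_divide_le_eq)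
qed

lemma prod_bd:
  fixes a b :: "'a::real_normed_algebra" and x K B :: real
  assumes "norm a \<le> K / (1 + x)\<^sup>2" "norm b \<le> B"
  shows "norm (a * b) \<le> (K * B) / (1 + x)\<^sup>2"
proof -
  have "norm (a * b) \<le> norm a * norm b" by (rule norm_mult_ineq)
  also have "\<dots> \<le> K / (1 + x)\<^sup>2 * B"
    by (rule mult_mono[OF assms]) (use assms in \<open>auto intro: order_trans[OF norm_ge_zero]\<close>)
  finally show ?thesis by simp
qed

lemma prod_bd_r:
  fixes a b :: "'a::real_normed_algebra" and x K B :: real
  assumes "norm a \<le> K / (1 + x)\<^sup>2" "norm b \<le> B"
  shows "norm a * norm b \<le> (K * B) / (1 + x)\<^sup>2"
proof -
  have "norm a * norm b \<le> K / (1 + x)\<^sup>2 * B"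
    by (rule mult_mono[OF assms]) (use assms in \<open>auto intro: order_trans[OF norm_ge_zero]\<close>)
  then show ?thesis by simp
qed

context volt begin

lemma B0: "B \<ge> 0" using VBd[of 0] norm_ge_zero[of "m1 0"] by linarith

lemma i_um2: "0 \<le> x \<Longrightarrow> (\<lambda>\<xi>. norm (u \<xi>) * norm (m2 \<xi>)) integrable_on {x..}"
  by (rule abs_int_w(2)[where C="K * B"])
     (auto intro!: continuous_intros continuous_on_subset[OF c0] continuous_on_subset[OF m2_cont] prod_bd_r b0 VBd[THEN conjunct2])

lemma i_um1: "0 \<le> x \<Longrightarrow> (\<lambda>\<xi>. norm (u \<xi>) * norm (m1 \<xi>)) integrable_on {x..}"
  by (rule abs_int_w(2)[where C="K * B"])
     (auto intro!: continuous_intros continuous_on_subset[OF c0] continuous_on_subset[OF m1_cont] prod_bd_r b0 VBd[THEN conjunct1])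

lemma nm1: assumes x: "0 \<le> x" shows "norm (m1 x) \<le> integral {x..} (\<lambda>\<xi>. norm (u \<xi>) * norm (m2 \<xi>))"
proof -
  have "norm (integral {x..} (\<lambda>\<xi>. exp (2 * \<i> * k * complex_of_real (\<xi> - x)) * u \<xi> * m2 \<xi>))
      \<le> integral {x..} (\<lambda>\<xi>. norm (u \<xi>) * norm (m2 \<xi>))"
  proof (rule integral_norm_bound_integral)
    show "(\<lambda>\<xi>. exp (2 * \<i> * k * complex_of_real (\<xi> - x)) * u \<xi> * m2 \<xi>) integrable_on {x..}"
      using VA[OF x] by blast
    show "(\<lambda>\<xi>. norm (u \<xi>) * norm (m2 \<xi>)) integrable_on {x..}" by (rule i_um2[OF x])
    fix \<xi> assume "\<xi> \<in> {x..}"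
    then have "norm (exp (2 * \<i> * k * complex_of_real (\<xi> - x)) * (u \<xi> * m2 \<xi>)) \<le> norm (u \<xi> * m2 \<xi>)"
      by (intro norm_mult_le1[OF norm_exp_upper[OF k(1)] order_refl]) auto
    then show "norm (exp (2 * \<i> * k * complex_of_real (\<xi> - x)) * u \<xi> * m2 \<xi>) \<le> norm (u \<xi>) * norm (m2 \<xi>)"
      by (simp add: mult.assoc norm_mult)
  qed
  then show ?thesis using integral_unique[OF VA[OF x]] by simp
qed

lemma nm2: assumes x: "0 \<le> x" shows "norm (m2 x) \<le> 1 + integral {x..} (\<lambda>\<xi>. norm (u \<xi>) * norm (m1 \<xi>))"
proof -
  have "norm (integral {x..} (\<lambda>\<xi>. complex_of_real lam * cnj (u \<xi>) * m1 \<xi>))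
      \<le> integral {x..} (\<lambda>\<xi>. norm (u \<xi>) * norm (m1 \<xi>))"
  proof (rule integral_norm_bound_integral)
    show "(\<lambda>\<xi>. complex_of_real lam * cnj (u \<xi>) * m1 \<xi>) integrable_on {x..}"
      using VB[OF x] by blast
    show "(\<lambda>\<xi>. norm (u \<xi>) * norm (m1 \<xi>)) integrable_on {x..}" by (rule i_um1[OF x])
    fix \<xi> assume "\<xi> \<in> {x..}"
    have "norm (complex_of_real lam * cnj (u \<xi>) * m1 \<xi>) = \<bar>lam\<bar> * (norm (u \<xi>) * norm (m1 \<xi>))"
      by (simp add: norm_mult)
    also have "\<dots> \<le> 1 * (norm (u \<xi>) * norm (m1 \<xi>))"
      by (rule mult_right_mono[OF lam]) simp
    finally show "norm (complex_of_real lam * cnj (u \<xi>) * m1 \<xi>) \<le> norm (u \<xi>) * norm (m1 \<xi>)" by simp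
  qed
  moreover have "m2 x = 1 - integral {x..} (\<lambda>\<xi>. complex_of_real lam * cnj (u \<xi>) * m1 \<xi>)"
    using integral_unique[OF VB[OF x]] by simp
  ultimately show ?thesis by (metis add_le_cancel_left norm_one norm_triangle_ineq4 order_trans)
qed

definition "mu x = norm (m1 x) + norm (m2 x)"

lemma mu_cont: "continuous_on {0..} mu"
  unfolding mu_def by (intro continuous_intros m1_cont m2_cont)

lemma mu_nonneg: "mu x \<ge> 0" unfolding mu_def by simp

lemma mu_le_B: "0 \<le> x \<Longrightarrow> mu x \<le> 2 * B" unfolding mu_def using VBd[of x] by simp

lemma mu_ineq: assumes x: "0 \<le> x"
  shows "mu x \<le> 1 + integral {x..} (\<lambda>\<xi>. K / (1 + \<xi>)\<^sup>2 * mu \<xi>)"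
proof -
  have "mu x \<le> 1 + (integral {x..} (\<lambda>\<xi>. norm (u \<xi>) * norm (m2 \<xi>)) + integral {x..} (\<lambda>\<xi>. norm (u \<xi>) * norm (m1 \<xi>)))"
    unfolding mu_def using nm1[OF x] nm2[OF x] by simp
  also have "\<dots> = 1 + integral {x..} (\<lambda>\<xi>. norm (u \<xi>) * norm (m2 \<xi>) + norm (u \<xi>) * norm (m1 \<xi>))"
    using integral_add[OF i_um2[OF x] i_um1[OF x]] by simp
  also have "\<dots> = 1 + integral {x..} (\<lambda>\<xi>. norm (u \<xi>) * mu \<xi>)"
    by (rule arg_cong[where f="\<lambda>f. 1 + integral {x..} f"]) (auto simp: mu_def algebra_simps)
  also have "integral {x..} (\<lambda>\<xi>. norm (u \<xi>) * mu \<xi>) \<le> integral {x..} (\<lambda>\<xi>. K / (1 + \<xi>)\<^sup>2 * mu \<xi>)"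
  proof (rule integral_le)
    show "(\<lambda>\<xi>. norm (u \<xi>) * mu \<xi>) integrable_on {x..}"
      using integrable_add[OF i_um2[OF x] i_um1[OF x]] by (simp add: mu_def algebra_simps)
    show "(\<lambda>\<xi>. K / (1 + \<xi>)\<^sup>2 * mu \<xi>) integrable_on {x..}"
    proof (rule abs_int_w(2)[where C="K * (2 * B)", OF x])
      show "continuous_on {x..} (\<lambda>\<xi>. K / (1 + \<xi>)\<^sup>2 * mu \<xi>)"
        using x by (intro continuous_intros continuous_on_subset[OF mu_cont]) auto
      fix \<xi> assume "x \<le> \<xi>"
      then have "\<xi> \<ge> 0" using x by simp
      then show "norm (K / (1 + \<xi>)\<^sup>2 * mu \<xi>) \<le> K * (2 * B) / (1 + \<xi>)\<^sup>2"
        using mu_le_B[of \<xi>] mu_nonneg[of \<xi>] K0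
        by (simp add: abs_mult mult_left_mono divide_right_mono)
    qed
    fix \<xi> assume "\<xi> \<in> {x..}"
    then show "norm (u \<xi>) * mu \<xi> \<le> K / (1 + \<xi>)\<^sup>2 * mu \<xi>"
      using x b0[of \<xi>] mu_nonneg[of \<xi>] by (intro mult_right_mono) auto
  qed
  finally show ?thesis by simp
qed

definition "psi x = exp (2 * K / (1 + x))"

lemma psi_ge1: "0 \<le> x \<Longrightarrow> psi x \<ge> 1" unfolding psi_def using K0 by simp
lemma psi_le: "0 \<le> x \<Longrightarrow> psi x \<le> exp (2 * K)"
  unfolding psi_def using K0 w_le1[of x "2 * K"] by simp

lemma gronwall: assumes x: "0 \<le> x" shows "mu x \<le> 2 * exp (2 * K)"
proof -
  define S where "S = (SUP y\<in>{0..}. mu y / psi y)"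
  have bdd: "bdd_above ((\<lambda>y. mu y / psi y) ` {0..})"
  proof (rule bdd_aboveI2)
    fix y :: real assume "y \<in> {0..}"
    then have y: "y \<ge> 0" by simp
    have "mu y / psi y \<le> mu y" using psi_ge1[OF y] mu_nonneg[of y] div_ge1 by blast
    also have "\<dots> \<le> 2 * B" by (rule mu_le_B[OF y])
    finally show "mu y / psi y \<le> 2 * B" .
  qed
  have up: "mu y \<le> S * psi y" if y: "y \<ge> 0" for y
  proof -
    have "mu y / psi y \<le> S" unfolding S_def by (rule cSUP_upper[OF _ bdd]) (use y in simp)
    then show ?thesis using psi_ge1[OF y] by (simp add: divide_le_eq)
  qed
  have S0: "S \<ge> 0"
  proof -
    have "mu 0 / psi 0 \<le> S" unfolding S_def by (rule cSUP_upper[OF _ bdd]) simp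
    moreover have "0 \<le> mu 0 / psi 0" using mu_nonneg[of 0] psi_ge1[of 0] by simp
    ultimately show ?thesis by linarith
  qed
  have key: "mu y / psi y \<le> max 1 (S / 2)" if y: "y \<ge> 0" for y
  proof -
    have PI: "((\<lambda>\<xi>. S * (K / (1 + \<xi>)\<^sup>2 * psi \<xi>)) has_integral S * ((psi y - 1) / 2)) {y..}"
      using has_integral_mult_right[OF psi_int[OF K0 y], of S] unfolding psi_def .
    have "integral {y..} (\<lambda>\<xi>. K / (1 + \<xi>)\<^sup>2 * mu \<xi>) \<le> integral {y..} (\<lambda>\<xi>. S * (K / (1 + \<xi>)\<^sup>2 * psi \<xi>))"
    proof (rule integral_le)
      show "(\<lambda>\<xi>. K / (1 + \<xi>)\<^sup>2 * mu \<xi>) integrable_on {y..}"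
      proof (rule abs_int_w(2)[where C="K * (2 * B)", OF y])
        show "continuous_on {y..} (\<lambda>\<xi>. K / (1 + \<xi>)\<^sup>2 * mu \<xi>)"
          using y by (intro continuous_intros continuous_on_subset[OF mu_cont]) auto
        fix \<xi> assume "y \<le> \<xi>"
        then have "\<xi> \<ge> 0" using y by simp
        then show "norm (K / (1 + \<xi>)\<^sup>2 * mu \<xi>) \<le> K * (2 * B) / (1 + \<xi>)\<^sup>2"
          using mu_le_B[of \<xi>] mu_nonneg[of \<xi>] K0
          by (simp add: abs_mult mult_left_mono divide_right_mono)
      qed
      show "(\<lambda>\<xi>. S * (K / (1 + \<xi>)\<^sup>2 * psi \<xi>)) integrable_on {y..}"
        using PI by (rule has_integral_integrable)
      fix \<xi> assume "\<xi> \<in> {y..}"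
      then have \<xi>: "\<xi> \<ge> 0" using y by simp
      have "K / (1 + \<xi>)\<^sup>2 * mu \<xi> \<le> K / (1 + \<xi>)\<^sup>2 * (S * psi \<xi>)"
        by (rule mult_left_mono[OF up[OF \<xi>]]) (use K0 \<xi> in simp)
      then show "K / (1 + \<xi>)\<^sup>2 * mu \<xi> \<le> S * (K / (1 + \<xi>)\<^sup>2 * psi \<xi>)" by (simp add: algebra_simps)
    qed
    also have "\<dots> = S * ((psi y - 1) / 2)"
      using PI by (rule integral_unique)
    finally have "mu y \<le> 1 + S * ((psi y - 1) / 2)" using mu_ineq[OF y] by simp
    then have "mu y / psi y \<le> (1 + S * ((psi y - 1) / 2)) / psi y"
      using psi_ge1[OF y] by (simp add: divide_right_mono)
    also have "\<dots> = S / 2 + (1 - S / 2) / psi y"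
      using psi_ge1[OF y] by (simp add: field_simps)
    also have "\<dots> \<le> max 1 (S / 2)"
    proof (cases "S \<le> 2")
      case True
      have "(1 - S / 2) / psi y \<le> 1 - S / 2"
        using True psi_ge1[OF y] div_ge1[of "1 - S / 2" "psi y"] by simp
      then show ?thesis by simp
    next
      case False
      have "(1 - S / 2) / psi y \<le> 0"
        using False psi_ge1[OF y] by (simp add: divide_le_0_iff)
      then show ?thesis by simp
    qed
    finally show ?thesis .
  qed
  have "(SUP y\<in>{0..}. mu y / psi y) \<le> max 1 (S / 2)" by (rule cSUP_least) (use key in auto)
  then have "S \<le> max 1 (S / 2)" unfolding S_def .
  then have S2: "S \<le> 2" by (simp add: max_def split: if_splits)
  have "mu x \<le> S * psi x" by (rule up[OF x])
  also have "\<dots> \<le> 2 * exp (2 * K)"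
    by (rule mult_mono[OF S2 psi_le[OF x]]) (use psi_ge1[OF x] in auto)
  finally show ?thesis .
qed

definition "Mb = 2 * exp (2 * K)"

lemma m1_bd: "0 \<le> x \<Longrightarrow> norm (m1 x) \<le> Mb"
  using gronwall[of x] unfolding mu_def Mb_def by (smt (verit) norm_ge_zero)
lemma m2_bd: "0 \<le> x \<Longrightarrow> norm (m2 x) \<le> Mb"
  using gronwall[of x] unfolding mu_def Mb_def by (smt (verit) norm_ge_zero)

end


lemma w_add:
  fixes a b :: "'a::real_normed_vector"
  assumes "norm a \<le> A / (1 + x)\<^sup>2" "norm b \<le> B / (1 + x)\<^sup>2"
  shows "norm (a + b) \<le> (A + B) / (1 + x)\<^sup>2"
  using norm_triangle_ineq[of a b] assms by (simp add: add_divide_distrib)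

lemma w_diff:
  fixes a b :: "'a::real_normed_vector"
  assumes "norm a \<le> A / (1 + x)\<^sup>2" "norm b \<le> B / (1 + x)\<^sup>2"
  shows "norm (a - b) \<le> (A + B) / (1 + x)\<^sup>2"
  using norm_triangle_ineq4[of a b] assms by (simp add: add_divide_distrib)

lemma norm_2ik: "norm (2 * \<i> * k) = 2 * norm k"
  by (simp add: norm_mult)

context prof begin

definition "Mb0 = 2 * exp (2 * K)"
definition "C1 = K * Mb0 + K * (K * Mb0)"
definition "C2 = (K * Mb0 + C1) / 2"
definition "C3 = K + 2 * K * K * C2"
definition "C4 = (C3 + K * K * C2) / 2"
definition "C5 = 2 * K * K * C2"
definition "C6 = 4 * K * K * C2 + K * K * C3"
definition "CA = K / 4 + K * K * C4 / 2 + (C5 + C6) / 4"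
definition "CB = K * C4"
definition "Nu = integral {0..} (\<lambda>\<xi>. cnj (u \<xi>) * u \<xi>)"

lemma Mb0_ge: "Mb0 \<ge> 0" by (simp add: Mb0_def)
lemma C_nonneg: "C1 \<ge> 0" "C2 \<ge> 0" "C3 \<ge> 0" "C4 \<ge> 0" "C5 \<ge> 0" "C6 \<ge> 0"
  using K0 Mb0_ge by (auto simp: C1_def C2_def C3_def C4_def C5_def C6_def)

 lemma cs: fixes x :: real and f :: "real \<Rightarrow> 'b::topological_space" assumes "0 \<le> x" "continuous_on {0..} f" shows "continuous_on {x..} f"
  using assms(2) by (rule continuous_on_subset) (use assms(1) in auto)

lemma ds: fixes x :: real and f :: "real \<Rightarrow> 'b::real_normed_vector" shows "0 \<le> x \<Longrightarrow> x \<le> y \<Longrightarrow> (f has_vector_derivative D) (at y within {0..}) \<Longrightarrow>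
    (f has_vector_derivative D) (at y within {x..})"
  by (rule has_vector_derivative_within_subset) auto

end

context volt begin

lemma Mb_eq: "Mb = Mb0" by (simp add: Mb_def Mb0_def)

lemma lum_bd: "0 \<le> x \<Longrightarrow> norm (complex_of_real lam * cnj (u x) * m1 x) \<le> K * Mb0"
proof -
  assume x: "0 \<le> x"
  have "norm (complex_of_real lam * cnj (u x) * m1 x) = \<bar>lam\<bar> * (norm (u x) * norm (m1 x))"
    by (simp add: norm_mult)
  also have "\<dots> \<le> 1 * (K * Mb0)"
    by (intro mult_mono lam) (auto intro!: mult_mono bK0 x m1_bd[unfolded Mb_eq] simp: K0)
  finally show ?thesis by simp
qed

definition "fp \<xi> = u1 \<xi> * m2 \<xi> + u \<xi> * (complex_of_real lam * cnj (u \<xi>) * m1 \<xi>)"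

lemma fp_der: "0 \<le> x \<Longrightarrow> ((\<lambda>\<xi>. u \<xi> * m2 \<xi>) has_vector_derivative fp x) (at x within {0..})"
  unfolding fp_def using d0 m2_der by (auto intro!: derivative_eq_intros)

lemma fp_cont: "continuous_on {0..} fp"
  unfolding fp_def by (intro continuous_intros c0 c1 m1_cont m2_cont)

lemma fp_bd: "0 \<le> x \<Longrightarrow> norm (fp x) \<le> C1 / (1 + x)\<^sup>2"
  unfolding fp_def C1_def
  by (intro w_add prod_bd b0 b1 lum_bd m2_bd[unfolded Mb_eq])

lemma E1_exact: assumes x: "0 \<le> x"
  shows "m1 x - u x * m2 x / (2 * \<i> * k) =
    integral {x..} (\<lambda>\<xi>. exp (2 * \<i> * k * complex_of_real (\<xi> - x)) * fp \<xi>) / (2 * \<i> * k)"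
proof -
  have I: "((\<lambda>\<xi>. exp (2 * \<i> * k * complex_of_real (\<xi> - x)) * (u \<xi> * m2 \<xi>)) has_integral
     (- (u x * m2 x) / (2 * \<i> * k) - integral {x..} (\<lambda>\<xi>. exp (2 * \<i> * k * complex_of_real (\<xi> - x)) * fp \<xi>) / (2 * \<i> * k))) {x..}"
  proof (rule ibp[OF x k(1) k0])
    show "((\<lambda>\<xi>. u \<xi> * m2 \<xi>) has_vector_derivative fp \<xi>) (at \<xi> within {x..})" if "x \<le> \<xi>" for \<xi>
      by (rule ds[OF x that fp_der]) (use x that in simp)
    show "continuous_on {x..} fp" by (rule cs[OF x fp_cont])
    show "norm (u \<xi> * m2 \<xi>) \<le> (K * Mb0) / (1 + \<xi>)\<^sup>2" if "x \<le> \<xi>" for \<xi>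
      using x that by (intro prod_bd b0 m2_bd[unfolded Mb_eq]) auto
    show "norm (fp \<xi>) \<le> C1 / (1 + \<xi>)\<^sup>2" if "x \<le> \<xi>" for \<xi>
      using x that by (intro fp_bd) auto
  qed
  have "- m1 x = - (u x * m2 x) / (2 * \<i> * k) - integral {x..} (\<lambda>\<xi>. exp (2 * \<i> * k * complex_of_real (\<xi> - x)) * fp \<xi>) / (2 * \<i> * k)"
    using has_integral_unique[OF VA[OF x] I[unfolded mult.assoc[symmetric]]] .
  then show ?thesis by (simp add: algebra_simps diff_divide_distrib)
qed

lemma E1: assumes x: "0 \<le> x"
  shows "norm (m1 x - u x * m2 x / (2 * \<i> * k)) \<le> C1 / (2 * norm k)"
proof -
  have "norm (exp (2 * \<i> * k * complex_of_real (\<xi> - x)) * fp \<xi>) \<le> C1 / (1 + \<xi>)\<^sup>2" if "x \<le> \<xi>" for \<xi>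
    using x that by (intro norm_mult_le1 norm_exp_upper k fp_bd) auto
  then have "norm (integral {x..} (\<lambda>\<xi>. exp (2 * \<i> * k * complex_of_real (\<xi> - x)) * fp \<xi>)) \<le> C1 / (1 + x)"
    using x by (intro abs_int_w(3) continuous_intros cs[OF x fp_cont]) auto
  also have "\<dots> \<le> C1" using x C_nonneg by (intro w_le1) auto
  finally show ?thesis unfolding E1_exact[OF x] norm_divide norm_2ik
    by (simp add: divide_right_mono)
qed

lemma m1_bdk: assumes x: "0 \<le> x" shows "norm (m1 x) \<le> C2 / norm k"
proof -
  have "norm (u x * m2 x / (2 * \<i> * k)) \<le> K * Mb0 / (2 * norm k)"
    unfolding norm_divide norm_2ik
    by (intro divide_right_mono) (auto intro!: order_trans[OF norm_mult_ineq] mult_mono bK0 x m2_bd[unfolded Mb_eq] simp: K0)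
  then have "norm (m1 x) \<le> C1 / (2 * norm k) + K * Mb0 / (2 * norm k)"
    using E1[OF x] norm_triangle_ineq[of "m1 x - u x * m2 x / (2 * \<i> * k)" "u x * m2 x / (2 * \<i> * k)"]
    by simp
  also have "\<dots> = C2 / norm k" by (simp add: C2_def add_divide_distrib algebra_simps)
  finally show ?thesis .
qed

lemma E2: assumes x: "0 \<le> x" shows "norm (m2 x - 1) \<le> K * C2 / norm k"
proof -
  have b: "norm (complex_of_real lam * cnj (u \<xi>) * m1 \<xi>) \<le> K * (C2 / norm k) / (1 + \<xi>)\<^sup>2" if "x \<le> \<xi>" for \<xi>
  proof -
    have "norm (complex_of_real lam * cnj (u \<xi>) * m1 \<xi>) = \<bar>lam\<bar> * (norm (u \<xi>) * norm (m1 \<xi>))"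
      by (simp add: norm_mult)
    also have "\<dots> \<le> 1 * (K * (C2 / norm k) / (1 + \<xi>)\<^sup>2)"
      using x that by (intro mult_mono lam prod_bd_r b0 m1_bdk) auto
    finally show ?thesis by simp
  qed
  have "norm (integral {x..} (\<lambda>\<xi>. complex_of_real lam * cnj (u \<xi>) * m1 \<xi>)) \<le> K * (C2 / norm k) / (1 + x)"
    using x b by (intro abs_int_w(3) continuous_intros cs[OF x c0] cs[OF x m1_cont]) auto
  also have "\<dots> \<le> K * (C2 / norm k)" using x C_nonneg K0 by (intro w_le1) auto
  finally show ?thesis using integral_unique[OF VB[OF x]] by (simp add: norm_minus_commute)
qed

end


context volt begin

definition "rr \<xi> = u1 \<xi> * (m2 \<xi> - 1) + u \<xi> * (complex_of_real lam * cnj (u \<xi>) * m1 \<xi>)"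

lemma rr_eq: "fp \<xi> = u1 \<xi> + rr \<xi>"
  by (simp add: fp_def rr_def algebra_simps)

lemma kpos: "norm k > 0" using k(2) by linarith

lemma lum_bdk: "0 \<le> x \<Longrightarrow> norm (complex_of_real lam * cnj (u x) * m1 x) \<le> K * (C2 / norm k)"
proof -
  assume x: "0 \<le> x"
  have "norm (complex_of_real lam * cnj (u x) * m1 x) = \<bar>lam\<bar> * (norm (u x) * norm (m1 x))"
    by (simp add: norm_mult)
  also have "\<dots> \<le> 1 * (K * (C2 / norm k))"
    by (intro mult_mono lam) (auto intro!: mult_mono bK0 x m1_bdk simp: K0)
  finally show ?thesis by simp
qed

lemma lu1m_bdk: "0 \<le> x \<Longrightarrow> norm (complex_of_real lam * cnj (u1 x) * m1 x) \<le> K * (C2 / norm k)"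
proof -
  assume x: "0 \<le> x"
  have "norm (complex_of_real lam * cnj (u1 x) * m1 x) = \<bar>lam\<bar> * (norm (u1 x) * norm (m1 x))"
    by (simp add: norm_mult)
  also have "\<dots> \<le> 1 * (K * (C2 / norm k))"
    by (intro mult_mono lam) (auto intro!: mult_mono bK1 x m1_bdk simp: K0)
  finally show ?thesis by simp
qed

lemma rr_bd: "0 \<le> x \<Longrightarrow> norm (rr x) \<le> (C5 / norm k) / (1 + x)\<^sup>2"
proof -
  assume x: "0 \<le> x"
  have "norm (rr x) \<le> (K * (K * C2 / norm k) + K * (K * (C2 / norm k))) / (1 + x)\<^sup>2"
    unfolding rr_def by (intro w_add prod_bd b0 b1 E2 lum_bdk x)
  also have "K * (K * C2 / norm k) + K * (K * (C2 / norm k)) = C5 / norm k"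
    by (simp add: C5_def field_simps)
  finally show ?thesis .
qed

lemma rr_cont: "continuous_on {0..} rr"
  unfolding rr_def by (intro continuous_intros c0 c1 m1_cont m2_cont)

lemma Eu1_bd: assumes x: "0 \<le> x"
  shows "(\<lambda>\<xi>. exp (2 * \<i> * k * complex_of_real (\<xi> - x)) * u1 \<xi>) integrable_on {x..}"
    "norm (integral {x..} (\<lambda>\<xi>. exp (2 * \<i> * k * complex_of_real (\<xi> - x)) * u1 \<xi>)) \<le> K / norm k"
proof -
  have a1: "(u1 has_vector_derivative u2 \<xi>) (at \<xi> within {x..})" if "x \<le> \<xi>" for \<xi>
    by (rule ds[OF x that d1]) (use x that in simp)
  have a2: "norm (u1 \<xi>) \<le> K / (1 + \<xi>)\<^sup>2" "norm (u2 \<xi>) \<le> K / (1 + \<xi>)\<^sup>2" if "x \<le> \<xi>" for \<xi>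
    using x that b1 b2 by auto
  note I = ibp_err[OF x k(1) k0 a1 cs[OF x c2] a2]
  show "(\<lambda>\<xi>. exp (2 * \<i> * k * complex_of_real (\<xi> - x)) * u1 \<xi>) integrable_on {x..}" by (rule I(1))
  have "norm (u1 x / (2 * \<i> * k)) \<le> K / (2 * norm k)"
    unfolding norm_divide norm_2ik using bK1[OF x] by (simp add: divide_right_mono)
  then have "norm (integral {x..} (\<lambda>\<xi>. exp (2 * \<i> * k * complex_of_real (\<xi> - x)) * u1 \<xi>)) \<le> K / (2 * norm k) + K / (2 * norm k)"
    using I(2) norm_triangle_ineq4[of "integral {x..} (\<lambda>\<xi>. exp (2 * \<i> * k * complex_of_real (\<xi> - x)) * u1 \<xi>) + u1 x / (2 * \<i> * k)" "u1 x / (2 * \<i> * k)"]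
    by simp
  then show "norm (integral {x..} (\<lambda>\<xi>. exp (2 * \<i> * k * complex_of_real (\<xi> - x)) * u1 \<xi>)) \<le> K / norm k"
    by simp
qed

lemma Err_bd: assumes x: "0 \<le> x"
  shows "(\<lambda>\<xi>. exp (2 * \<i> * k * complex_of_real (\<xi> - x)) * rr \<xi>) integrable_on {x..}"
    "norm (integral {x..} (\<lambda>\<xi>. exp (2 * \<i> * k * complex_of_real (\<xi> - x)) * rr \<xi>)) \<le> C5 / norm k"
proof -
  have b: "norm (exp (2 * \<i> * k * complex_of_real (\<xi> - x)) * rr \<xi>) \<le> (C5 / norm k) / (1 + \<xi>)\<^sup>2" if "x \<le> \<xi>" for \<xi>
    using x that by (intro norm_mult_le1 norm_exp_upper k rr_bd) auto
  have c: "continuous_on {x..} (\<lambda>\<xi>. exp (2 * \<i> * k * complex_of_real (\<xi> - x)) * rr \<xi>)"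
    by (intro continuous_intros cs[OF x rr_cont])
  show "(\<lambda>\<xi>. exp (2 * \<i> * k * complex_of_real (\<xi> - x)) * rr \<xi>) integrable_on {x..}"
    by (rule abs_int_w(2)[OF x c b])
  have "norm (integral {x..} (\<lambda>\<xi>. exp (2 * \<i> * k * complex_of_real (\<xi> - x)) * rr \<xi>)) \<le> (C5 / norm k) / (1 + x)"
    by (rule abs_int_w(3)[OF x c b])
  also have "\<dots> \<le> C5 / norm k" using x C_nonneg kpos by (intro w_le1) auto
  finally show "norm (integral {x..} (\<lambda>\<xi>. exp (2 * \<i> * k * complex_of_real (\<xi> - x)) * rr \<xi>)) \<le> C5 / norm k" .
qed

lemma E1b: assumes x: "0 \<le> x"
  shows "norm (m1 x - u x * m2 x / (2 * \<i> * k)) \<le> C3 / (2 * (norm k)\<^sup>2)"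
proof -
  define E where "E \<xi> = exp (2 * \<i> * k * complex_of_real (\<xi> - x))" for \<xi>
  have "integral {x..} (\<lambda>\<xi>. E \<xi> * fp \<xi>) = integral {x..} (\<lambda>\<xi>. E \<xi> * u1 \<xi> + E \<xi> * rr \<xi>)"
    by (simp add: rr_eq algebra_simps)
  also have "\<dots> = integral {x..} (\<lambda>\<xi>. E \<xi> * u1 \<xi>) + integral {x..} (\<lambda>\<xi>. E \<xi> * rr \<xi>)"
    using Eu1_bd(1)[OF x] Err_bd(1)[OF x] unfolding E_def by (rule integral_add)
  finally have eq: "integral {x..} (\<lambda>\<xi>. E \<xi> * fp \<xi>) = integral {x..} (\<lambda>\<xi>. E \<xi> * u1 \<xi>) + integral {x..} (\<lambda>\<xi>. E \<xi> * rr \<xi>)" .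
  have "norm (integral {x..} (\<lambda>\<xi>. E \<xi> * fp \<xi>)) \<le> K / norm k + C5 / norm k"
    unfolding eq using Eu1_bd(2)[OF x] Err_bd(2)[OF x] unfolding E_def
    by (intro order_trans[OF norm_triangle_ineq] add_mono)
  also have "\<dots> = C3 / norm k" by (simp add: C3_def C5_def add_divide_distrib)
  finally have n: "norm (integral {x..} (\<lambda>\<xi>. E \<xi> * fp \<xi>)) \<le> C3 / norm k" .
  have "norm (m1 x - u x * m2 x / (2 * \<i> * k)) = norm (integral {x..} (\<lambda>\<xi>. E \<xi> * fp \<xi>)) / (2 * norm k)"
    unfolding E1_exact[OF x] E_def norm_divide norm_2ik ..
  also have "\<dots> \<le> (C3 / norm k) / (2 * norm k)" by (rule divide_right_mono[OF n]) (use kpos in simp)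
  also have "\<dots> = C3 / (2 * (norm k)\<^sup>2)" by (simp add: power2_eq_square)
  finally show ?thesis .
qed

definition "m1d x = - 2 * \<i> * k * m1 x + u x * m2 x"

lemma m1d_cont: "continuous_on {0..} m1d"
  unfolding m1d_def by (intro continuous_intros c0 m1_cont m2_cont)

lemma m1d_bd: assumes x: "0 \<le> x" shows "norm (m1d x) \<le> C3 / norm k"
proof -
  have "m1d x = - (2 * \<i> * k) * (m1 x - u x * m2 x / (2 * \<i> * k))"
    using k0 by (simp add: m1d_def field_simps)
  then have "norm (m1d x) = 2 * norm k * norm (m1 x - u x * m2 x / (2 * \<i> * k))"
    by (simp add: norm_mult)
  also have "\<dots> \<le> 2 * norm k * (C3 / (2 * (norm k)\<^sup>2))"
    using E1b[OF x] kpos by (intro mult_left_mono) auto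
  also have "\<dots> = C3 / norm k" using kpos by (simp add: power2_eq_square)
  finally show ?thesis .
qed

lemma E1c: assumes x: "0 \<le> x"
  shows "norm (m1 x - u x / (2 * \<i> * k)) \<le> C4 / (norm k)\<^sup>2"
proof -
  have eq: "m1 x - u x / (2 * \<i> * k) = (m1 x - u x * m2 x / (2 * \<i> * k)) + u x * (m2 x - 1) / (2 * \<i> * k)"
    by (simp add: algebra_simps diff_divide_distrib)
  have "norm (u x * (m2 x - 1) / (2 * \<i> * k)) \<le> K * (K * C2 / norm k) / (2 * norm k)"
    unfolding norm_divide norm_2ik using kpos
    by (intro divide_right_mono order_trans[OF norm_mult_ineq] mult_mono bK0 x E2) (auto simp: K0)
  also have "\<dots> = K * K * C2 / (2 * (norm k)\<^sup>2)" by (simp add: power2_eq_square)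
  finally have n2: "norm (u x * (m2 x - 1) / (2 * \<i> * k)) \<le> K * K * C2 / (2 * (norm k)\<^sup>2)" .
  have "norm (m1 x - u x / (2 * \<i> * k)) \<le> C3 / (2 * (norm k)\<^sup>2) + K * K * C2 / (2 * (norm k)\<^sup>2)"
    unfolding eq using E1b[OF x] n2 by (intro order_trans[OF norm_triangle_ineq] add_mono)
  also have "\<dots> = C4 / (norm k)\<^sup>2" by (simp add: C4_def add_divide_distrib)
  finally show ?thesis .
qed

end


context prof begin
lemma Nu_int: "(\<lambda>\<xi>. cnj (u \<xi>) * u \<xi>) integrable_on {0..}"
  by (rule abs_int_w(2)[where C="K * K"])
     (auto intro!: continuous_intros c0 prod_bd bK0 simp: b0)
end

context volt begin

lemma E3: "norm (m2 0 - 1 + complex_of_real lam * Nu / (2 * \<i> * k)) \<le> CB / (norm k)\<^sup>2"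
proof -
  define c where "c = 2 * \<i> * k"
  define d where "d \<xi> = complex_of_real lam * cnj (u \<xi>) * (m1 \<xi> - u \<xi> / c)" for \<xi>
  have db: "norm (d \<xi>) \<le> (K * (C4 / (norm k)\<^sup>2)) / (1 + \<xi>)\<^sup>2" if "0 \<le> \<xi>" for \<xi>
  proof -
    have "norm (d \<xi>) = \<bar>lam\<bar> * (norm (u \<xi>) * norm (m1 \<xi> - u \<xi> / c))"
      by (simp add: d_def norm_mult)
    also have "\<dots> \<le> 1 * ((K * (C4 / (norm k)\<^sup>2)) / (1 + \<xi>)\<^sup>2)"
      using that by (intro mult_mono lam prod_bd_r b0 E1c[unfolded c_def[symmetric]]) auto
    finally show ?thesis by simp
  qed
  have dc: "continuous_on {0..} d"
    unfolding d_def by (intro continuous_intros c0 m1_cont) (use k0 in \<open>simp add: c_def\<close>)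
  have di: "d integrable_on {0..}" by (rule abs_int_w(2)[OF order_refl dc db]) auto
  have dn: "norm (integral {0..} d) \<le> (K * (C4 / (norm k)\<^sup>2)) / (1 + 0)"
    by (rule abs_int_w(3)[OF order_refl dc db]) auto
  have "integral {0..} (\<lambda>\<xi>. complex_of_real lam * cnj (u \<xi>) * m1 \<xi>)
      = integral {0..} (\<lambda>\<xi>. (complex_of_real lam / c) * (cnj (u \<xi>) * u \<xi>) + d \<xi>)"
    using k0 by (intro integral_cong) (simp add: d_def c_def field_simps)
  also have "\<dots> = (complex_of_real lam / c) * Nu + integral {0..} d"
  proof (rule integral_unique)
    show "((\<lambda>\<xi>. complex_of_real lam / c * (cnj (u \<xi>) * u \<xi>) + d \<xi>) has_integral
      complex_of_real lam / c * Nu + integral {0..} d) {0..}"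
      unfolding Nu_def
      by (intro has_integral_add has_integral_mult_right integrable_integral Nu_int di)
  qed
  finally have "1 - m2 0 = (complex_of_real lam / c) * Nu + integral {0..} d"
    using integral_unique[OF VB[of 0]] by simp
  then have "m2 0 - 1 + complex_of_real lam * Nu / c = - integral {0..} d"
    by (simp add: algebra_simps)
  then show ?thesis using dn by (simp add: c_def CB_def)
qed

definition "hh \<xi> = u \<xi> * (m2 \<xi> - 1)"
definition "hpp x = u2 x * (m2 x - 1) + u1 x * (complex_of_real lam * cnj (u x) * m1 x) +
   (u1 x * (complex_of_real lam * cnj (u x) * m1 x) + u x * (complex_of_real lam * cnj (u1 x) * m1 x + complex_of_real lam * cnj (u x) * m1d x))"

lemma m1_der': "0 \<le> x \<Longrightarrow> (m1 has_vector_derivative m1d x) (at x within {0..})"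
  unfolding m1d_def by (rule m1_der)

lemma hh_der: "0 \<le> x \<Longrightarrow> (hh has_vector_derivative rr x) (at x within {0..})"
  unfolding hh_def rr_def using d0 m2_der
  by (auto intro!: derivative_eq_intros simp: algebra_simps)

lemma rr_der: "0 \<le> x \<Longrightarrow> (rr has_vector_derivative hpp x) (at x within {0..})"
  unfolding rr_def hpp_def using d0 d1 m2_der m1_der'
  by (auto intro!: derivative_eq_intros simp: algebra_simps)

lemma hpp_cont: "continuous_on {0..} hpp"
  unfolding hpp_def by (intro continuous_intros c0 c1 c2 m1_cont m2_cont m1d_cont)

lemma lumd_bd: "0 \<le> x \<Longrightarrow> norm (complex_of_real lam * cnj (u x) * m1d x) \<le> K * (C3 / norm k)"
proof -
  assume x: "0 \<le> x"
  have "norm (complex_of_real lam * cnj (u x) * m1d x) = \<bar>lam\<bar> * (norm (u x) * norm (m1d x))"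
    by (simp add: norm_mult)
  also have "\<dots> \<le> 1 * (K * (C3 / norm k))"
    by (intro mult_mono lam) (auto intro!: mult_mono bK0 x m1d_bd simp: K0)
  finally show ?thesis by simp
qed

lemma hpp_bd: "0 \<le> x \<Longrightarrow> norm (hpp x) \<le> (C6 / norm k) / (1 + x)\<^sup>2"
proof -
  assume x: "0 \<le> x"
  have "norm (hpp x) \<le> (K * (K * C2 / norm k) + K * (K * (C2 / norm k)) +
      (K * (K * (C2 / norm k)) + K * (K * (C2 / norm k) + K * (C3 / norm k)))) / (1 + x)\<^sup>2"
    unfolding hpp_def
    by (intro w_add prod_bd b0 b1 b2 E2 lum_bdk x norm_triangle_le add_mono lu1m_bdk lumd_bd)
  also have "K * (K * C2 / norm k) + K * (K * (C2 / norm k)) +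
      (K * (K * (C2 / norm k)) + K * (K * (C2 / norm k) + K * (C3 / norm k))) = C6 / norm k"
    using kpos by (simp add: C6_def field_simps)
  finally show ?thesis .
qed

lemma hh_bd: "0 \<le> x \<Longrightarrow> norm (hh x) \<le> (K * (K * C2 / norm k)) / (1 + x)\<^sup>2"
  unfolding hh_def by (intro prod_bd b0 E2)

end


context volt begin

lemma Eu2_bd: assumes x: "0 \<le> x"
  shows "norm (integral {x..} (\<lambda>\<xi>. exp (2 * \<i> * k * complex_of_real (\<xi> - x)) * u2 \<xi>)) \<le> K / norm k"
proof -
  have a1: "(u2 has_vector_derivative u3 \<xi>) (at \<xi> within {x..})" if "x \<le> \<xi>" for \<xi>
    by (rule ds[OF x that d2]) (use x that in simp)
  have a2: "norm (u2 \<xi>) \<le> K / (1 + \<xi>)\<^sup>2" "norm (u3 \<xi>) \<le> K / (1 + \<xi>)\<^sup>2" if "x \<le> \<xi>" for \<xi>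
    using x that b2 b3 by auto
  note I = ibp_err[OF x k(1) k0 a1 cs[OF x c3] a2]
  have "norm (u2 x / (2 * \<i> * k)) \<le> K / (2 * norm k)"
    unfolding norm_divide norm_2ik using bK2[OF x] by (simp add: divide_right_mono)
  then have "norm (integral {x..} (\<lambda>\<xi>. exp (2 * \<i> * k * complex_of_real (\<xi> - x)) * u2 \<xi>)) \<le> K / (2 * norm k) + K / (2 * norm k)"
    using I(2) norm_triangle_ineq4[of "integral {x..} (\<lambda>\<xi>. exp (2 * \<i> * k * complex_of_real (\<xi> - x)) * u2 \<xi>) + u2 x / (2 * \<i> * k)" "u2 x / (2 * \<i> * k)"]
    by simp
  then show ?thesis by simp
qed

lemma E4: "norm (m1 0 - u 0 / (2 * \<i> * k) - (u1 0 / 4 + complex_of_real lam * u 0 * Nu / 4) / k\<^sup>2)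
    \<le> CA / (norm k) ^ 3"
proof -
  define c where "c = 2 * \<i> * k"
  have c0: "c \<noteq> 0" using k0 by (simp add: c_def)
  define E where "E \<xi> = exp (2 * \<i> * k * complex_of_real (\<xi> - 0))" for \<xi>
  have z: "(0::real) \<le> 0" by simp
  have dd: "\<And>f f' \<xi>. 0 \<le> \<xi> \<Longrightarrow> (f has_vector_derivative f') (at \<xi> within {0..}) \<Longrightarrow> (f has_vector_derivative f') (at \<xi> within {0..})"
    by simp
  define J1 where "J1 = integral {0..} (\<lambda>\<xi>. E \<xi> * u1 \<xi>)"
  define J2 where "J2 = integral {0..} (\<lambda>\<xi>. E \<xi> * u2 \<xi>)"
  define J3 where "J3 = integral {0..} (\<lambda>\<xi>. E \<xi> * rr \<xi>)"
  have IA: "((\<lambda>\<xi>. E \<xi> * u \<xi>) has_integral (- u 0 / c - J1 / c)) {0..}"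
    unfolding E_def J1_def c_def
    by (rule ibp[where a=0 and C=K and C'=K]) (use k k0 in \<open>auto intro: d0 c1 b0 b1\<close>)
  have IB: "((\<lambda>\<xi>. E \<xi> * u1 \<xi>) has_integral (- u1 0 / c - J2 / c)) {0..}"
    unfolding E_def J2_def c_def
    by (rule ibp[where a=0 and C=K and C'=K]) (use k k0 in \<open>auto intro: d1 c2 b1 b2\<close>)
  have IC: "((\<lambda>\<xi>. E \<xi> * hh \<xi>) has_integral (- hh 0 / c - J3 / c)) {0..}"
    unfolding E_def J3_def c_def
    by (rule ibp[where a=0 and C="K * (K * C2 / norm k)" and C'="C5 / norm k"]) (simp_all only: order_refl not_False_eq_True k k0 hh_der rr_cont hh_bd rr_bd)
  have J2b: "norm J2 \<le> K / norm k" unfolding J2_def E_def using Eu2_bd[OF z] by simp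
  have J3b: "norm J3 \<le> (C5 + C6) / (2 * (norm k)\<^sup>2)"
  proof -
    have I: "norm (J3 + rr 0 / c) \<le> (C6 / norm k) / (2 * norm k)"
      unfolding J3_def E_def c_def
      by (rule ibp_err(2)[where a=0 and C="C5 / norm k" and C'="C6 / norm k" and h'=hpp]) (simp_all only: order_refl not_False_eq_True k k0 rr_der hpp_cont rr_bd hpp_bd)
    have r0: "norm (rr 0) \<le> C5 / norm k" using rr_bd[OF z] by simp
    have "norm (rr 0 / c) \<le> (C5 / norm k) / (2 * norm k)"
      unfolding c_def norm_divide norm_2ik by (rule divide_right_mono[OF r0]) (use kpos in simp)
    then have "norm J3 \<le> (C6 / norm k) / (2 * norm k) + (C5 / norm k) / (2 * norm k)"
      using I norm_triangle_ineq4[of "J3 + rr 0 / c" "rr 0 / c"] by simp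
    also have "\<dots> = (C5 + C6) / (2 * (norm k)\<^sup>2)" using kpos by (simp add: field_simps power2_eq_square)
    finally show ?thesis .
  qed
  have "((\<lambda>\<xi>. E \<xi> * u \<xi> + E \<xi> * hh \<xi>) has_integral ((- u 0 / c - J1 / c) + (- hh 0 / c - J3 / c))) {0..}"
    by (rule has_integral_add[OF IA IC])
  moreover have "(\<lambda>\<xi>. E \<xi> * u \<xi> + E \<xi> * hh \<xi>) = (\<lambda>\<xi>. exp (2 * \<i> * k * complex_of_real (\<xi> - 0)) * u \<xi> * m2 \<xi>)"
    by (rule ext) (simp add: E_def hh_def algebra_simps)
  ultimately have "- m1 0 = (- u 0 / c - J1 / c) + (- hh 0 / c - J3 / c)"
    using has_integral_unique VA[OF z] by metis
  then have m1e: "m1 0 = u 0 / c + J1 / c + hh 0 / c + J3 / c" by (simp add: algebra_simps)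
  have J1e: "J1 = - u1 0 / c - J2 / c" unfolding J1_def using IB by (rule integral_unique)
  define \<delta> where "\<delta> = m2 0 - 1 + complex_of_real lam * Nu / c"
  have \<delta>b: "norm \<delta> \<le> CB / (norm k)\<^sup>2" unfolding \<delta>_def c_def by (rule E3)
  have hh0: "hh 0 = u 0 * (\<delta> - complex_of_real lam * Nu / c)" by (simp add: hh_def \<delta>_def)
  have kc: "k\<^sup>2 = - (c * c) / 4"
  proof -
    have "c * c = 4 * (\<i> * \<i>) * (k * k)" by (simp add: c_def algebra_simps)
    also have "\<dots> = - 4 * (k * k)" by simp
    finally show ?thesis by (simp add: power2_eq_square)
  qed
  have eq: "m1 0 - u 0 / c - (u1 0 / 4 + complex_of_real lam * u 0 * Nu / 4) / k\<^sup>2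
      = - J2 / (c * c) + u 0 * \<delta> / c + J3 / c"
    unfolding m1e J1e hh0 kc using c0 by (simp add: field_simps)
  have n1: "norm (- J2 / (c * c)) \<le> (K / norm k) / (4 * (norm k)\<^sup>2)"
  proof -
    have "norm (- J2 / (c * c)) = norm J2 / (4 * (norm k)\<^sup>2)"
      unfolding norm_divide norm_minus_cancel norm_mult c_def norm_2ik by (simp add: power2_eq_square)
    also have "\<dots> \<le> (K / norm k) / (4 * (norm k)\<^sup>2)"
      by (rule divide_right_mono[OF J2b]) simp
    finally show ?thesis .
  qed
  have n2: "norm (u 0 * \<delta> / c) \<le> K * (CB / (norm k)\<^sup>2) / (2 * norm k)"
    unfolding norm_divide c_def norm_2ik using kpos
    by (intro divide_right_mono order_trans[OF norm_mult_ineq] mult_mono bK0 \<delta>b[unfolded c_def]) (auto simp: K0)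
  have n3: "norm (J3 / c) \<le> ((C5 + C6) / (2 * (norm k)\<^sup>2)) / (2 * norm k)"
    unfolding norm_divide c_def norm_2ik by (rule divide_right_mono[OF J3b]) (use kpos in simp)
  have "norm (m1 0 - u 0 / (2 * \<i> * k) - (u1 0 / 4 + complex_of_real lam * u 0 * Nu / 4) / k\<^sup>2)
      \<le> (K / norm k) / (4 * (norm k)\<^sup>2) + K * (CB / (norm k)\<^sup>2) / (2 * norm k) + ((C5 + C6) / (2 * (norm k)\<^sup>2)) / (2 * norm k)"
    unfolding c_def[symmetric] eq
    using n1 n2 n3 by (intro order_trans[OF norm_triangle_ineq] add_mono order_trans[OF norm_triangle_ineq]) auto
  also have "\<dots> = CA / (norm k) ^ 3"
    using kpos by (simp add: CA_def CB_def field_simps power2_eq_square power3_eq_cube)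
  finally show ?thesis .
qed

end


lemma cont_slice:
  fixes f :: "real \<Rightarrow> real \<Rightarrow> complex"
  assumes "continuous_on (A \<times> B) (\<lambda>(x, t). f x t)" "t \<in> B"
  shows "continuous_on A (\<lambda>x. f x t)"
proof -
  have "continuous_on A (\<lambda>x. (\<lambda>(x, t). f x t) (x, t))"
    by (rule continuous_on_compose2[OF assms(1)]) (use assms(2) in \<open>auto intro!: continuous_intros\<close>)
  then show ?thesis by simp
qed

lemma cont_slice2:
  fixes f :: "real \<Rightarrow> real \<Rightarrow> complex"
  assumes "continuous_on (A \<times> B) (\<lambda>(x, t). f x t)" "x \<in> A"
  shows "continuous_on B (\<lambda>t. f x t)"
proof -
  have "continuous_on B (\<lambda>t. (\<lambda>(x, t). f x t) (x, t))"
    by (rule continuous_on_compose2[OF assms(1)]) (use assms(2) in \<open>auto intro!: continuous_intros\<close>)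
  then show ?thesis by simp
qed

lemma cont_pair:
  fixes f :: "real \<Rightarrow> real \<Rightarrow> complex"
  assumes "continuous_on S (\<lambda>(x, t). f x t)"
  shows "continuous_on S (\<lambda>p. f (fst p) (snd p))"
  using assms by (simp add: case_prod_unfold)

locale nlsq =
  fixes lam T :: real and q :: "real \<Rightarrow> real \<Rightarrow> complex"
  assumes sm: "smooth_decaying T q" and nls: "solves_NLS lam T q" and Tpos: "0 < T"
begin

abbreviation "F m n \<equiv> (px ^^ m) ((pt T ^^ n) q)"

lemma Fall:
  "(\<forall>x\<ge>0. \<forall>t\<in>{0..T}. ((\<lambda>y. F m n y t) has_vector_derivative px (F m n) x t) (at x within {0..}) \<and>
      ((\<lambda>s. F m n x s) has_vector_derivative pt T (F m n) x t) (at t within {0..T})) \<and>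
   continuous_on ({0..} \<times> {0..T}) (\<lambda>(x, t). F m n x t) \<and>
   (\<forall>N::nat. \<exists>C. \<forall>x\<ge>0. \<forall>t\<in>{0..T}. (1 + x) ^ N * norm (F m n x t) \<le> C)"
  using sm[unfolded smooth_decaying_def Let_def, rule_format, of m n] .

lemma Fdx: "0 \<le> x \<Longrightarrow> t \<in> {0..T} \<Longrightarrow> ((\<lambda>y. F m n y t) has_vector_derivative px (F m n) x t) (at x within {0..})"
  using Fall[of m n] by simp

lemma Fdt: "0 \<le> x \<Longrightarrow> t \<in> {0..T} \<Longrightarrow> ((\<lambda>s. F m n x s) has_vector_derivative pt T (F m n) x t) (at t within {0..T})"
  using Fall[of m n] by simp

lemma Fc: "continuous_on ({0..} \<times> {0..T}) (\<lambda>(x, t). F m n x t)"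
  using Fall[of m n] by simp

lemma Fb: "\<exists>C. \<forall>x\<ge>0. \<forall>t\<in>{0..T}. (1 + x) ^ N * norm (F m n x t) \<le> C"
  using Fall[of m n] by simp

lemma Fb2: "\<exists>C\<ge>0. \<forall>x\<ge>0. \<forall>t\<in>{0..T}. norm (F m n x t) \<le> C / (1 + x)\<^sup>2"
proof -
  obtain C where C: "\<forall>x\<ge>0. \<forall>t\<in>{0..T}. (1 + x) ^ 2 * norm (F m n x t) \<le> C" using Fb by blast
  have "norm (F m n x t) \<le> C / (1 + x)\<^sup>2" if "x \<ge> 0" "t \<in> {0..T}" for x t
    using C that by (simp add: pos_le_divide_eq mult.commute)
  moreover have "C \<ge> 0"
  proof -
    have "(1 + 0) ^ 2 * norm (F m n 0 0) \<le> C" using C Tpos by (meson atLeastAtMost_iff less_eq_real_def order_refl)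
    then show ?thesis by (rule order_trans[rotated]) simp
  qed
  ultimately show ?thesis by blast
qed

lemma q_dx: "0 \<le> x \<Longrightarrow> t \<in> {0..T} \<Longrightarrow> ((\<lambda>y. q y t) has_vector_derivative px q x t) (at x within {0..})"
  using Fdx[of x t 0 0] by simp
lemma qx_dx: "0 \<le> x \<Longrightarrow> t \<in> {0..T} \<Longrightarrow> ((\<lambda>y. px q y t) has_vector_derivative px (px q) x t) (at x within {0..})"
  using Fdx[of x t 1 0] by simp
lemma qxx_dx: "0 \<le> x \<Longrightarrow> t \<in> {0..T} \<Longrightarrow> ((\<lambda>y. px (px q) y t) has_vector_derivative px (px (px q)) x t) (at x within {0..})"
  using Fdx[of x t 2 0] by (simp add: numeral_2_eq_2)
lemma q_dt: "0 \<le> x \<Longrightarrow> t \<in> {0..T} \<Longrightarrow> ((\<lambda>s. q x s) has_vector_derivative pt T q x t) (at t within {0..T})"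
  using Fdt[of x t 0 0] by simp
lemma q_c: "continuous_on ({0..} \<times> {0..T}) (\<lambda>(x, t). q x t)" using Fc[of 0 0] by simp
lemma qx_c: "continuous_on ({0..} \<times> {0..T}) (\<lambda>(x, t). px q x t)" using Fc[of 1 0] by simp
lemma qxx_c: "continuous_on ({0..} \<times> {0..T}) (\<lambda>(x, t). px (px q) x t)" using Fc[of 2 0] by (simp add: numeral_2_eq_2)
lemma qxxx_c: "continuous_on ({0..} \<times> {0..T}) (\<lambda>(x, t). px (px (px q)) x t)" using Fc[of 3 0] by (simp add: numeral_3_eq_3)
lemma qt_c: "continuous_on ({0..} \<times> {0..T}) (\<lambda>(x, t). pt T q x t)" using Fc[of 0 1] by simp

lemma q_b: "\<exists>C\<ge>0. \<forall>x\<ge>0. \<forall>t\<in>{0..T}. norm (q x t) \<le> C / (1 + x)\<^sup>2" using Fb2[of 0 0] by simp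
lemma qx_b: "\<exists>C\<ge>0. \<forall>x\<ge>0. \<forall>t\<in>{0..T}. norm (px q x t) \<le> C / (1 + x)\<^sup>2" using Fb2[of 1 0] by simp
lemma qxx_b: "\<exists>C\<ge>0. \<forall>x\<ge>0. \<forall>t\<in>{0..T}. norm (px (px q) x t) \<le> C / (1 + x)\<^sup>2" using Fb2[of 2 0] by (simp add: numeral_2_eq_2)
lemma qxxx_b: "\<exists>C\<ge>0. \<forall>x\<ge>0. \<forall>t\<in>{0..T}. norm (px (px (px q)) x t) \<le> C / (1 + x)\<^sup>2" using Fb2[of 3 0] by (simp add: numeral_3_eq_3)

end


context nlsq begin

definition "G x s = cnj (q x s) * q x s"
definition "Dd x s = cnj (q x s) * pt T q x s + cnj (pt T q x s) * q x s"
definition "W x s = cnj (q x s) * px q x s - q x s * cnj (px q x s)"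
definition "V x s = cnj (q x s) * px (px q) x s - q x s * cnj (px (px q) x s)"

lemma D_int: assumes x: "0 \<le> x" and t: "t \<in> {0..T}"
  shows "((\<lambda>s. Dd x s) has_integral (G x t - G x 0)) {0..t}"
proof -
  have "((\<lambda>s. G x s) has_vector_derivative Dd x s) (at s within {0..t})" if s: "s \<in> {0..t}" for s
  proof -
    have s': "s \<in> {0..T}" using s t by auto
    have d: "((\<lambda>s. q x s) has_vector_derivative pt T q x s) (at s within {0..t})"
      by (rule has_vector_derivative_within_subset[OF q_dt[OF x s']]) (use t in auto)
    show ?thesis unfolding G_def Dd_def
      by (rule has_vector_derivative_mult[OF has_vector_derivative_cnj[OF d] d])
  qed
  then show ?thesis using t by (intro fundamental_theorem_of_calculus) auto
qed

lemma V_int: assumes s: "s \<in> {0..T}" and X: "0 \<le> X"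
  shows "((\<lambda>x. V x s) has_integral (W X s - W 0 s)) {0..X}"
proof -
  have "((\<lambda>x. W x s) has_vector_derivative V x s) (at x within {0..X})" if x: "x \<in> {0..X}" for x
  proof -
    have x0: "0 \<le> x" using x by simp
    have d1: "((\<lambda>y. q y s) has_vector_derivative px q x s) (at x within {0..X})"
      by (rule has_vector_derivative_within_subset[OF q_dx[OF x0 s]]) auto
    have d2: "((\<lambda>y. px q y s) has_vector_derivative px (px q) x s) (at x within {0..X})"
      by (rule has_vector_derivative_within_subset[OF qx_dx[OF x0 s]]) auto
    show ?thesis unfolding W_def
      by (rule has_vector_derivative_eq_rhs[OF has_vector_derivative_diff[OF
           has_vector_derivative_mult[OF has_vector_derivative_cnj[OF d1] d2]
           has_vector_derivative_mult[OF d1 has_vector_derivative_cnj[OF d2]]]])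
         (simp add: V_def algebra_simps)
  qed
  then show ?thesis using X by (intro fundamental_theorem_of_calculus) auto
qed

lemma D_eq_V: assumes x: "0 < x" and s: "s \<in> {0<..<T}"
  shows "Dd x s = \<i> * V x s"
proof -
  define R where "R = 2 * complex_of_real lam * complex_of_real ((norm (q x s))\<^sup>2) * q x s"
  have "\<i> * pt T q x s + px (px q) x s - R = 0"
    using nls x s unfolding solves_NLS_def R_def by blast
  then have "\<i> * (\<i> * pt T q x s + px (px q) x s - R) = 0" by simp
  then have qt: "pt T q x s = \<i> * (px (px q) x s - R)"
    by (simp add: algebra_simps)
  have cR: "cnj R = 2 * complex_of_real lam * complex_of_real ((norm (q x s))\<^sup>2) * cnj (q x s)"
    by (simp add: R_def)
  show ?thesis unfolding Dd_def V_def qt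
    by (simp add: cR R_def algebra_simps)
qed

end


context nlsq begin

lemma q_cs: "t \<in> {0..T} \<Longrightarrow> continuous_on {0..} (\<lambda>x. q x t)" by (rule cont_slice[OF q_c])
lemma qx_cs: "t \<in> {0..T} \<Longrightarrow> continuous_on {0..} (\<lambda>x. px q x t)" by (rule cont_slice[OF qx_c])
lemma q_ct: "0 \<le> x \<Longrightarrow> continuous_on {0..T} (\<lambda>t. q x t)" by (rule cont_slice2[OF q_c]) simp
lemma qx_ct: "0 \<le> x \<Longrightarrow> continuous_on {0..T} (\<lambda>t. px q x t)" by (rule cont_slice2[OF qx_c]) simp

lemma W_cont: "0 \<le> X \<Longrightarrow> continuous_on {0..T} (W X)"
  unfolding W_def by (intro continuous_intros q_ct qx_ct)

lemma G_cont: "t \<in> {0..T} \<Longrightarrow> continuous_on {0..} (\<lambda>x. G x t)"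
  unfolding G_def by (intro continuous_intros q_cs)

lemma Dd_cont: "continuous_on ({0..} \<times> {0..T}) (\<lambda>p. Dd (fst p) (snd p))"
  unfolding Dd_def
  by (intro continuous_intros cont_pair q_c qt_c)

lemma eqX: assumes t: "t \<in> {0<..<T}" and X: "0 \<le> X"
  shows "integral {0..X} (\<lambda>x. G x t) - integral {0..X} (\<lambda>x. G x 0)
       = \<i> * integral {0..t} (W X) - \<i> * integral {0..t} (W 0)"
proof -
  have tT: "t \<in> {0..T}" using t by auto
  have t0: "0 \<le> t" using t by auto
  have cG: "continuous_on {0..X} (\<lambda>x. G x s)" if "s \<in> {0..T}" for s
    by (rule continuous_on_subset[OF G_cont[OF that]]) auto
  have "integral {0..X} (\<lambda>x. G x t) - integral {0..X} (\<lambda>x. G x 0) = integral {0..X} (\<lambda>x. G x t - G x 0)"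
    by (rule integral_diff[symmetric]) (use cG tT Tpos in \<open>auto intro!: integrable_continuous_interval\<close>)
  also have "\<dots> = integral {0..X} (\<lambda>x. integral {0..t} (\<lambda>s. Dd x s))"
  proof (rule integral_cong)
    fix x assume "x \<in> {0..X}"
    then have "0 \<le> x" by simp
    show "G x t - G x 0 = integral {0..t} (\<lambda>s. Dd x s)"
      using D_int[OF \<open>0 \<le> x\<close> tT] by (simp add: integral_unique)
  qed
  also have "\<dots> = integral {0..t} (\<lambda>s. integral {0..X} (\<lambda>x. Dd x s))"
  proof -
    have c: "continuous_on (cbox (0, 0) (X, t)) (\<lambda>(x, s). Dd x s)"
    proof -
      have "cbox (0::real, 0::real) (X, t) \<subseteq> {0..} \<times> {0..T}" using t by (auto simp: cbox_Pair_eq)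
      then have "continuous_on (cbox (0::real, 0::real) (X, t)) (\<lambda>p. Dd (fst p) (snd p))"
        by (rule continuous_on_subset[OF Dd_cont])
      then show ?thesis by (simp add: case_prod_unfold)
    qed
    show ?thesis using integral_swap_continuous[OF c] by (simp add: cbox_interval)
  qed
  also have "\<dots> = integral {0..t} (\<lambda>s. \<i> * (W X s - W 0 s))"
  proof (rule integral_spike[of "{0}"])
    show "negligible {0::real}" by simp
    fix s assume s: "s \<in> {0..t} - {0}"
    then have sT: "s \<in> {0<..<T}" "s \<in> {0..T}" using t by auto
    have "((\<lambda>x. \<i> * V x s) has_integral \<i> * (W X s - W 0 s)) {0..X}"
      by (rule has_integral_mult_right[OF V_int[OF sT(2) X]])
    then have "((\<lambda>x. Dd x s) has_integral \<i> * (W X s - W 0 s)) {0..X}"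
    proof (rule has_integral_spike_finite[where S="{0}" and f="\<lambda>x. \<i> * V x s", rotated 2])
      show "finite {0::real}" by simp
      fix x assume "x \<in> {0..X} - {0}"
      then have "0 < x" by auto
      then show "Dd x s = \<i> * V x s" by (rule D_eq_V[OF _ sT(1)])
    qed
    then show "\<i> * (W X s - W 0 s) = integral {0..X} (\<lambda>x. Dd x s)" by (simp add: integral_unique)
  qed
  also have "\<dots> = \<i> * integral {0..t} (W X) - \<i> * integral {0..t} (W 0)"
  proof -
    have i1: "W X integrable_on {0..t}"
      by (rule integrable_continuous_interval, rule continuous_on_subset[OF W_cont[OF X]]) (use t in auto)
    have i2: "W 0 integrable_on {0..t}"
      by (rule integrable_continuous_interval, rule continuous_on_subset[OF W_cont]) (use t in auto)
    have "integral {0..t} (\<lambda>s. \<i> * (W X s - W 0 s)) = \<i> * integral {0..t} (\<lambda>s. W X s - W 0 s)"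
      by (rule integral_mult_right)
    also have "integral {0..t} (\<lambda>s. W X s - W 0 s) = integral {0..t} (W X) - integral {0..t} (W 0)"
      by (rule integral_diff[OF i1 i2])
    finally show ?thesis by (simp add: algebra_simps)
  qed
  finally show ?thesis .
qed

lemma mass: assumes t: "t \<in> {0<..<T}"
  shows "integral {0..} (\<lambda>x. G x t) - integral {0..} (\<lambda>x. G x 0) = - \<i> * integral {0..t} (W 0)"
proof -
  have tT: "t \<in> {0..T}" using t by auto
  have T0: "0 \<in> {0..T}" using Tpos by auto
  obtain Kq where Kq: "Kq \<ge> 0" "\<forall>x\<ge>0. \<forall>s\<in>{0..T}. norm (q x s) \<le> Kq / (1 + x)\<^sup>2" using q_b by blast
  obtain Kx where Kx: "Kx \<ge> 0" "\<forall>x\<ge>0. \<forall>s\<in>{0..T}. norm (px q x s) \<le> Kx / (1 + x)\<^sup>2" using qx_b by blast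
  have Gb: "norm (G x s) \<le> (Kq * Kq) / (1 + x)\<^sup>2" if "x \<ge> 0" "s \<in> {0..T}" for x s
  proof -
    have a: "norm (q x s) \<le> Kq / (1 + x)\<^sup>2" using Kq that by auto
    have b: "norm (q x s) \<le> Kq" using a w_le[OF that(1) Kq(1)] by linarith
    show ?thesis unfolding G_def by (rule prod_bd) (use a b in auto)
  qed
  have GA: "(\<lambda>x. G x s) absolutely_integrable_on {0..}" if "s \<in> {0..T}" for s
    by (rule abs_int_w(1)[OF order_refl G_cont[OF that]]) (use Gb that in auto)
  have L1: "(\<lambda>n. integral {0..0 + real n} (\<lambda>x. G x t) - integral {0..0 + real n} (\<lambda>x. G x 0))
      \<longlonglongrightarrow> integral {0..} (\<lambda>x. G x t) - integral {0..} (\<lambda>x. G x 0)"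
    by (intro tendsto_diff tail_lim GA tT T0)
  have Wb: "norm (integral {0..t} (W X)) \<le> (2 * (Kq * Kx) / (1 + X)\<^sup>2) * t" if X: "0 \<le> X" for X
  proof -
    have "norm (integral {0..t} (W X)) \<le> (2 * (Kq * Kx) / (1 + X)\<^sup>2) * Henstock_Kurzweil_Integration.content {0..t}"
    proof (rule has_integral_bound_real[where S="{}"])
      show "0 \<le> 2 * (Kq * Kx) / (1 + X)\<^sup>2" using Kq Kx by simp
      show "(W X has_integral integral {0..t} (W X)) {0..t}"
        by (rule integrable_integral, rule integrable_continuous_interval,
            rule continuous_on_subset[OF W_cont[OF X]]) (use t in auto)
      fix s assume s: "s \<in> {0..t} - {}"
      then have sT: "s \<in> {0..T}" using t by auto
      have qb: "norm (q X s) \<le> Kq / (1 + X)\<^sup>2" using Kq X sT by auto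
      have xb: "norm (px q X s) \<le> Kx" using Kx(2) X sT w_le[OF X Kx(1)] by (meson order_trans)
      have "norm (W X s) \<le> (Kq * Kx) / (1 + X)\<^sup>2 + (Kq * Kx) / (1 + X)\<^sup>2"
        unfolding W_def
        by (rule order_trans[OF norm_triangle_ineq4 add_mono]) (auto intro!: prod_bd qb xb)
      then show "norm (W X s) \<le> 2 * (Kq * Kx) / (1 + X)\<^sup>2" by simp
    qed simp
    then show ?thesis using t by simp
  qed
  have L2: "(\<lambda>n. integral {0..t} (W (0 + real n))) \<longlonglongrightarrow> 0"
  proof (rule Lim_null_comparison)
    show "\<forall>\<^sub>F n in sequentially. norm (integral {0..t} (W (0 + real n))) \<le> (2 * (Kq * Kx) * t) * (1 / (1 + (0 + real n))\<^sup>2)"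
    proof (intro always_eventually allI)
      fix n :: nat
      have "norm (integral {0..t} (W (0 + real n))) \<le> (2 * (Kq * Kx) / (1 + (0 + real n))\<^sup>2) * t"
        by (rule Wb) simp
      then show "norm (integral {0..t} (W (0 + real n))) \<le> (2 * (Kq * Kx) * t) * (1 / (1 + (0 + real n))\<^sup>2)"
        by (simp add: field_simps)
    qed
    have "(\<lambda>n. 1 / (1 + (0 + real n))\<^sup>2) \<longlonglongrightarrow> 0" by real_asymp
    then show "(\<lambda>n. (2 * (Kq * Kx) * t) * (1 / (1 + (0 + real n))\<^sup>2)) \<longlonglongrightarrow> 0"
      by (metis mult_zero_right tendsto_mult_left)
  qed
  have "(\<lambda>n. \<i> * integral {0..t} (W (0 + real n)) - \<i> * integral {0..t} (W 0)) \<longlonglongrightarrow> \<i> * 0 - \<i> * integral {0..t} (W 0)"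
    by (intro tendsto_intros L2)
  moreover have "(\<lambda>n. integral {0..0 + real n} (\<lambda>x. G x t) - integral {0..0 + real n} (\<lambda>x. G x 0))
      = (\<lambda>n. \<i> * integral {0..t} (W (0 + real n)) - \<i> * integral {0..t} (W 0))"
    by (rule ext) (rule eqX[OF t], simp)
  ultimately have "(\<lambda>n. integral {0..0 + real n} (\<lambda>x. G x t) - integral {0..0 + real n} (\<lambda>x. G x 0))
      \<longlonglongrightarrow> - \<i> * integral {0..t} (W 0)" by simp
  with L1 show ?thesis using LIMSEQ_unique by blast
qed

end


lemma final_alg:
  fixes m1 m2 A B B1 D k :: complex and CA CB :: real
  assumes k1: "norm k \<ge> 1" and kR: "norm k \<ge> 4 * (norm D + CB)" and CB0: "CB \<ge> 0" and CA0: "CA \<ge> 0"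
    and hB: "B1 = B + A * D"
    and e1: "norm (m1 - A / k - B1 / k\<^sup>2) \<le> CA / norm k ^ 3"
    and e2: "norm (m2 - 1 - D / k) \<le> CB / norm k ^ 2"
  shows "norm (m1 / m2 - A / k - B / k\<^sup>2) \<le> 2 * (CA + norm B * norm D + (norm A + norm B) * CB) / norm k ^ 3"
proof -
  define n where "n = norm k"
  have n1: "n \<ge> 1" using k1 by (simp add: n_def)
  have k0: "k \<noteq> 0" using k1 by auto
  define E1 where "E1 = m1 - A / k - B1 / k\<^sup>2"
  define E2 where "E2 = m2 - 1 - D / k"
  have nE1: "norm E1 \<le> CA / n ^ 3" using e1 by (simp add: E1_def n_def)
  have nE2: "norm E2 \<le> CB / n ^ 2" using e2 by (simp add: E2_def n_def)
  have "norm (m2 - 1) \<le> norm D / n + CB / n ^ 2"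
  proof -
    have "m2 - 1 = D / k + E2" by (simp add: E2_def)
    then have "norm (m2 - 1) \<le> norm (D / k) + norm E2" by (simp add: norm_triangle_ineq)
    then show ?thesis using nE2 by (simp add: norm_divide n_def)
  qed
  also have "CB / n ^ 2 \<le> CB / n"
    using n1 CB0 by (intro divide_left_mono) (auto simp: power2_eq_square intro: order_trans[of _ n] mult_right_mono[of 1 n n, simplified])
  also have "norm D / n + CB / n = (norm D + CB) / n" by (simp add: add_divide_distrib)
  also have "\<dots> \<le> 1 / 4" using kR n1 by (simp add: n_def divide_simps)
  finally have m2c: "norm (m2 - 1) \<le> 1 / 4" by simp
  have m2b: "norm m2 \<ge> 1 / 2"
  proof -
    have "1 \<le> norm m2 + norm (m2 - 1)" using norm_triangle_ineq4[of m2 "m2 - 1"] by simp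
    then show ?thesis using m2c by linarith
  qed
  then have m20: "m2 \<noteq> 0" by auto
  define P where "P = A / k + B / k\<^sup>2"
  have key: "m1 - P * m2 = E1 - B * D / k ^ 3 - P * E2"
    unfolding E1_def E2_def P_def hB using k0 by (simp add: field_simps power2_eq_square power3_eq_cube)
  have nP: "norm P \<le> (norm A + norm B) / n"
  proof -
    have "norm P \<le> norm A / n + norm B / n ^ 2"
      unfolding P_def by (rule order_trans[OF norm_triangle_ineq]) (simp add: norm_divide norm_power n_def)
    also have "norm B / n ^ 2 \<le> norm B / n"
      using n1 by (intro divide_left_mono) (auto simp: power2_eq_square intro: mult_right_mono[of 1 n n, simplified])
    finally show ?thesis by (simp add: add_divide_distrib)
  qed
  have "norm (m1 - P * m2) \<le> CA / n ^ 3 + norm B * norm D / n ^ 3 + (norm A + norm B) / n * (CB / n ^ 2)"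
  proof -
    have "norm (m1 - P * m2) \<le> norm E1 + norm (B * D / k ^ 3) + norm (P * E2)"
      unfolding key by (rule order_trans[OF norm_triangle_ineq4]) (simp add: norm_triangle_ineq4)
    also have "norm (B * D / k ^ 3) = norm B * norm D / n ^ 3" by (simp add: norm_divide norm_mult norm_power n_def)
    also have "norm (P * E2) \<le> (norm A + norm B) / n * (CB / n ^ 2)"
      unfolding norm_mult by (rule mult_mono[OF nP nE2]) (use n1 in auto)
    finally show ?thesis using nE1 by simp
  qed
  also have "\<dots> = (CA + norm B * norm D + (norm A + norm B) * CB) / n ^ 3"
    using n1 by (simp add: field_simps power2_eq_square power3_eq_cube)
  finally have nk: "norm (m1 - P * m2) \<le> (CA + norm B * norm D + (norm A + norm B) * CB) / n ^ 3" .
  have "m1 / m2 - A / k - B / k\<^sup>2 = (m1 - P * m2) / m2"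
    unfolding P_def using m20 by (simp add: field_simps)
  then have "norm (m1 / m2 - A / k - B / k\<^sup>2) = norm (m1 - P * m2) / norm m2" by (simp add: norm_divide)
  also have "\<dots> \<le> norm (m1 - P * m2) / (1 / 2)"
    using m2b by (intro divide_left_mono) auto
  also have "\<dots> \<le> ((CA + norm B * norm D + (norm A + norm B) * CB) / n ^ 3) / (1 / 2)"
    by (intro divide_right_mono nk) auto
  finally show ?thesis by (simp add: n_def algebra_simps)
qed

context prof begin
lemma CA_nonneg: "CA \<ge> 0" using K0 C_nonneg by (simp add: CA_def)
lemma CB_nonneg: "CB \<ge> 0" using K0 C_nonneg by (simp add: CB_def)
end

lemma exp_sq:
  fixes k Q M :: complex and x \<xi> :: real
  shows "exp (- \<i> * k * complex_of_real (x - \<xi>)) * Q * M * exp (- \<i> * k * complex_of_real (x - \<xi>))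
       = exp (2 * \<i> * k * complex_of_real (\<xi> - x)) * Q * M"
proof -
  have "- \<i> * k * complex_of_real (x - \<xi>) + - \<i> * k * complex_of_real (x - \<xi>) = 2 * \<i> * k * complex_of_real (\<xi> - x)"
    by (simp add: algebra_simps)
  then have e: "exp (- \<i> * k * complex_of_real (x - \<xi>)) * exp (- \<i> * k * complex_of_real (x - \<xi>)) = exp (2 * \<i> * k * complex_of_real (\<xi> - x))"
    by (metis mult_exp_exp)
  have "exp (- \<i> * k * complex_of_real (x - \<xi>)) * Q * M * exp (- \<i> * k * complex_of_real (x - \<xi>))
      = (exp (- \<i> * k * complex_of_real (x - \<xi>)) * exp (- \<i> * k * complex_of_real (x - \<xi>))) * (Q * M)"
    by (simp only: ac_simps)
  also have "\<dots> = exp (2 * \<i> * k * complex_of_real (\<xi> - x)) * Q * M" by (subst e) (simp only: mult.assoc)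
  finally show ?thesis .
qed

lemma volt_res:
  assumes P: "prof u u1 u2 u3 K lam" and k: "Im k \<ge> 0" "norm k \<ge> 1"
    and VA: "\<And>x. 0 \<le> x \<Longrightarrow> ((\<lambda>\<xi>. exp (2 * \<i> * k * complex_of_real (\<xi> - x)) * u \<xi> * m2 \<xi>)
                 has_integral - m1 x) {x..}"
    and VB: "\<And>x. 0 \<le> x \<Longrightarrow> ((\<lambda>\<xi>. complex_of_real lam * cnj (u \<xi>) * m1 \<xi>)
                 has_integral (1 - m2 x)) {x..}"
    and VBd: "\<And>x. 0 \<le> x \<Longrightarrow> norm (m1 x) \<le> B \<and> norm (m2 x) \<le> B"
  shows "norm (m1 0 - u 0 / (2 * \<i> * k) - (u1 0 / 4 + complex_of_real lam * u 0 * integral {0..} (\<lambda>\<xi>. cnj (u \<xi>) * u \<xi>) / 4) / k\<^sup>2)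
    \<le> prof.CA K / (norm k) ^ 3"
    "norm (m2 0 - 1 + complex_of_real lam * integral {0..} (\<lambda>\<xi>. cnj (u \<xi>) * u \<xi>) / (2 * \<i> * k)) \<le> prof.CB K / (norm k)\<^sup>2"
proof -
  interpret volt u u1 u2 u3 K lam k m1 m2 B
    by (rule volt.intro[OF P], unfold_locales) (use k VA VB VBd in auto)
  show "norm (m1 0 - u 0 / (2 * \<i> * k) - (u1 0 / 4 + complex_of_real lam * u 0 * integral {0..} (\<lambda>\<xi>. cnj (u \<xi>) * u \<xi>) / 4) / k\<^sup>2)
    \<le> prof.CA K / (norm k) ^ 3"
    using E4 unfolding Nu_def .
  show "norm (m2 0 - 1 + complex_of_real lam * integral {0..} (\<lambda>\<xi>. cnj (u \<xi>) * u \<xi>) / (2 * \<i> * k)) \<le> prof.CB K / (norm k)\<^sup>2"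
    using E3 unfolding Nu_def .
qed


theorem lemma3p1:
  fixes lam T :: real
    and q :: "real \<Rightarrow> real \<Rightarrow> complex"
    and Phi1 Phi2 :: "real \<Rightarrow> complex \<Rightarrow> complex"
    and M12 M22 :: "real \<Rightarrow> real \<Rightarrow> complex \<Rightarrow> complex"
    and a b :: "complex \<Rightarrow> complex"
    and F12 c :: "real \<Rightarrow> complex \<Rightarrow> complex"
  assumes lam: "lam = 1 \<or> lam = -1"
    and T: "0 < T"
    and smooth: "smooth_decaying T q"
    and nls: "solves_NLS lam T q"
    and Phi: "solves_Phi lam T q Phi1 Phi2"
    and mu3: "solves_mu3_col2 lam T q M12 M22"
    and a_def: "\<And>k. a k = M22 0 0 k"
    and b_def: "\<And>k. b k = M12 0 0 k"
    and F12_def: "\<And>t k. F12 t k = M12 0 t k"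
    and c_def: "\<And>t k. c t k = F12 t k / a k"
  shows "\<forall>t\<in>{0<..<T}. \<exists>C R. \<forall>k\<in>D1. norm k \<ge> R \<longrightarrow>
           norm (c t k - (g0 q t / (2 * \<i>)) / k
                  - (g1 q t / 4 - (\<i> * g0 q t / 2) * (complex_of_real lam / 2) *
                       integral {0..t} (\<lambda>\<tau>. cnj (g0 q \<tau>) * g1 q \<tau> - g0 q \<tau> * cnj (g1 q \<tau>)))
                    / k\<^sup>2)
           \<le> C / norm k ^ 3"
proof
  fix t assume t: "t \<in> {0<..<T}"
  interpret nlsq lam T q by unfold_locales (use smooth nls T in auto)
  have tT: "t \<in> {0..T}" and T0: "0 \<in> {0..T}" using t T by auto
  have lam1: "\<bar>lam\<bar> \<le> 1" using lam by auto
  obtain K0 where K0: "K0 \<ge> 0" "\<forall>x\<ge>0. \<forall>s\<in>{0..T}. norm (q x s) \<le> K0 / (1 + x)\<^sup>2" using q_b by blast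
  obtain K1 where K1: "K1 \<ge> 0" "\<forall>x\<ge>0. \<forall>s\<in>{0..T}. norm (px q x s) \<le> K1 / (1 + x)\<^sup>2" using qx_b by blast
  obtain K2 where K2: "K2 \<ge> 0" "\<forall>x\<ge>0. \<forall>s\<in>{0..T}. norm (px (px q) x s) \<le> K2 / (1 + x)\<^sup>2" using qxx_b by blast
  obtain K3 where K3: "K3 \<ge> 0" "\<forall>x\<ge>0. \<forall>s\<in>{0..T}. norm (px (px (px q)) x s) \<le> K3 / (1 + x)\<^sup>2" using qxxx_b by blast
  define K where "K = max (max K0 K1) (max K2 K3)"
  have wm: "Ki / (1 + x)\<^sup>2 \<le> K / (1 + x)\<^sup>2" if "Ki \<le> K" for Ki x :: real
    using that by (simp add: divide_right_mono)
  have prof_s: "prof (\<lambda>x. q x s) (\<lambda>x. px q x s) (\<lambda>x. px (px q) x s) (\<lambda>x. px (px (px q)) x s) K lam"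
    if s: "s \<in> {0..T}" for s
  proof
    show "((\<lambda>x. q x s) has_vector_derivative px q x s) (at x within {0..})" if "0 \<le> x" for x
      by (rule q_dx[OF that s])
    show "((\<lambda>x. px q x s) has_vector_derivative px (px q) x s) (at x within {0..})" if "0 \<le> x" for x
      by (rule qx_dx[OF that s])
    show "((\<lambda>x. px (px q) x s) has_vector_derivative px (px (px q)) x s) (at x within {0..})" if "0 \<le> x" for x
      by (rule qxx_dx[OF that s])
    show "continuous_on {0..} (\<lambda>x. px (px (px q)) x s)" by (rule cont_slice[OF qxxx_c s])
    show "norm (q x s) \<le> K / (1 + x)\<^sup>2" if "0 \<le> x" for x
    proof -
      have "K0 \<le> K" by (simp add: K_def)
      moreover have "norm (q x s) \<le> K0 / (1 + x)\<^sup>2" using K0(2) that s by blast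
      ultimately show ?thesis using wm[of K0 x] by linarith
    qed
    show "norm (px q x s) \<le> K / (1 + x)\<^sup>2" if "0 \<le> x" for x
    proof -
      have "K1 \<le> K" by (simp add: K_def)
      moreover have "norm (px q x s) \<le> K1 / (1 + x)\<^sup>2" using K1(2) that s by blast
      ultimately show ?thesis using wm[of K1 x] by linarith
    qed
    show "norm (px (px q) x s) \<le> K / (1 + x)\<^sup>2" if "0 \<le> x" for x
    proof -
      have "K2 \<le> K" by (simp add: K_def)
      moreover have "norm (px (px q) x s) \<le> K2 / (1 + x)\<^sup>2" using K2(2) that s by blast
      ultimately show ?thesis using wm[of K2 x] by linarith
    qed
    show "norm (px (px (px q)) x s) \<le> K / (1 + x)\<^sup>2" if "0 \<le> x" for x
    proof -
      have "K3 \<le> K" by (simp add: K_def)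
      moreover have "norm (px (px (px q)) x s) \<le> K3 / (1 + x)\<^sup>2" using K3(2) that s by blast
      ultimately show ?thesis using wm[of K3 x] by linarith
    qed
    show "\<bar>lam\<bar> \<le> 1" by (rule lam1)
  qed
  define N where "N s = integral {0..} (\<lambda>\<xi>. cnj (q \<xi> s) * q \<xi> s)" for s
  have res: "norm (M12 0 s k - q 0 s / (2 * \<i> * k) - (px q 0 s / 4 + complex_of_real lam * q 0 s * N s / 4) / k\<^sup>2)
        \<le> prof.CA K / (norm k) ^ 3 \<and>
      norm (M22 0 s k - 1 + complex_of_real lam * N s / (2 * \<i> * k)) \<le> prof.CB K / (norm k)\<^sup>2"
    if s: "s \<in> {0..T}" and k: "Im k \<ge> 0" "norm k \<ge> 1" for s k
  proof -
    have m: "(\<exists>B. \<forall>x\<ge>0. norm (M12 x s k) \<le> B \<and> norm (M22 x s k) \<le> B) \<and>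
        (\<forall>x\<ge>0.
          ((\<lambda>\<xi>. exp (- \<i> * k * complex_of_real (x - \<xi>)) * q \<xi> s * M22 \<xi> s k
                  * exp (- \<i> * k * complex_of_real (x - \<xi>)))
             has_integral (- M12 x s k)) {x..} \<and>
          ((\<lambda>\<xi>. complex_of_real lam * cnj (q \<xi> s) * M12 \<xi> s k)
             has_integral (1 - M22 x s k)) {x..})"
      using mu3 s k unfolding solves_mu3_col2_def by blast
    then obtain B where B: "\<And>x. 0 \<le> x \<Longrightarrow> norm (M12 x s k) \<le> B \<and> norm (M22 x s k) \<le> B" by blast
    have VA: "((\<lambda>\<xi>. exp (2 * \<i> * k * complex_of_real (\<xi> - x)) * q \<xi> s * M22 \<xi> s k) has_integral - M12 x s k) {x..}"
      if "0 \<le> x" for x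
    proof -
      have fe: "(\<lambda>\<xi>. exp (- \<i> * k * complex_of_real (x - \<xi>)) * q \<xi> s * M22 \<xi> s k
                  * exp (- \<i> * k * complex_of_real (x - \<xi>)))
          = (\<lambda>\<xi>. exp (2 * \<i> * k * complex_of_real (\<xi> - x)) * q \<xi> s * M22 \<xi> s k)"
        by (rule ext) (rule exp_sq)
      have "((\<lambda>\<xi>. exp (- \<i> * k * complex_of_real (x - \<xi>)) * q \<xi> s * M22 \<xi> s k
                  * exp (- \<i> * k * complex_of_real (x - \<xi>))) has_integral (- M12 x s k)) {x..}"
        using m that by blast
      then show ?thesis by (simp only: fe)
    qed
    have VB: "((\<lambda>\<xi>. complex_of_real lam * cnj (q \<xi> s) * M12 \<xi> s k) has_integral (1 - M22 x s k)) {x..}"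
      if "0 \<le> x" for x
      using m that by blast
    note R = volt_res[OF prof_s[OF s] k, of "\<lambda>x. M22 x s k" "\<lambda>x. M12 x s k", OF VA VB B]
    show ?thesis using R unfolding N_def by simp
  qed
  have massN: "N t - N 0 = - \<i> * integral {0..t} (\<lambda>\<tau>. cnj (g0 q \<tau>) * g1 q \<tau> - g0 q \<tau> * cnj (g1 q \<tau>))"
  proof -
    have "W 0 = (\<lambda>\<tau>. cnj (g0 q \<tau>) * g1 q \<tau> - g0 q \<tau> * cnj (g1 q \<tau>))"
      by (rule ext) (simp add: W_def g0_def g1_def)
    moreover have "(\<lambda>x. G x s) = (\<lambda>\<xi>. cnj (q \<xi> s) * q \<xi> s)" for s by (rule ext) (simp add: G_def)
    ultimately show ?thesis using mass[OF t] unfolding N_def by simp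
  qed
  define I where "I = integral {0..t} (\<lambda>\<tau>. cnj (g0 q \<tau>) * g1 q \<tau> - g0 q \<tau> * cnj (g1 q \<tau>))"
  define A where "A = g0 q t / (2 * \<i>)"
  define BB where "BB = g1 q t / 4 - (\<i> * g0 q t / 2) * (complex_of_real lam / 2) * I"
  define B1 where "B1 = g1 q t / 4 + complex_of_real lam * g0 q t * N t / 4"
  define D where "D = - complex_of_real lam * N 0 / (2 * \<i>)"
  define CA where "CA = prof.CA K"
  define CB where "CB = prof.CB K"
  have CA0: "CA \<ge> 0" unfolding CA_def using prof.CA_nonneg[OF prof_s[OF tT]] .
  have CB0: "CB \<ge> 0" unfolding CB_def using prof.CB_nonneg[OF prof_s[OF tT]] .
  have hB: "B1 = BB + A * D"
  proof -
    have Nt: "N t = N 0 - \<i> * I" using massN unfolding I_def by (simp add: algebra_simps)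
    show ?thesis unfolding B1_def BB_def A_def D_def Nt by (simp add: field_simps)
  qed
  show "\<exists>C R. \<forall>k\<in>D1. norm k \<ge> R \<longrightarrow>
           norm (c t k - (g0 q t / (2 * \<i>)) / k
                  - (g1 q t / 4 - (\<i> * g0 q t / 2) * (complex_of_real lam / 2) *
                       integral {0..t} (\<lambda>\<tau>. cnj (g0 q \<tau>) * g1 q \<tau> - g0 q \<tau> * cnj (g1 q \<tau>)))
                    / k\<^sup>2)
           \<le> C / norm k ^ 3"
  proof (rule exI[of _ "2 * (CA + norm BB * norm D + (norm A + norm BB) * CB)"],
         rule exI[of _ "max 1 (4 * (norm D + CB))"], intro ballI impI)
    fix k assume kD: "k \<in> D1" and kR: "max 1 (4 * (norm D + CB)) \<le> norm k"
    have k: "Im k \<ge> 0" "norm k \<ge> 1" using kD kR by (auto simp: D1_def)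
    have kR': "norm k \<ge> 4 * (norm D + CB)" using kR by simp
    have e1: "norm (F12 t k - A / k - B1 / k\<^sup>2) \<le> CA / norm k ^ 3"
    proof -
      have Ak: "A / k = q 0 t / (2 * \<i> * k)" unfolding A_def g0_def by (rule divide_divide_eq_left)
      have B1e: "B1 = px q 0 t / 4 + complex_of_real lam * q 0 t * N t / 4" unfolding B1_def g0_def g1_def ..
      show ?thesis using conjunct1[OF res[OF tT k]] unfolding F12_def Ak B1e CA_def .
    qed
    have e2: "norm (a k - 1 - D / k) \<le> CB / norm k ^ 2"
    proof -
      have k0: "k \<noteq> 0" using k by auto
      have e: "a k - 1 - D / k = M22 0 0 k - 1 + complex_of_real lam * N 0 / (2 * \<i> * k)"
        using k0 by (simp add: a_def D_def field_simps)
      show ?thesis unfolding e CB_def power2_eq_square[symmetric] by (rule conjunct2[OF res[OF T0 k]])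
    qed
    have "norm (F12 t k / a k - A / k - BB / k\<^sup>2) \<le> 2 * (CA + norm BB * norm D + (norm A + norm BB) * CB) / norm k ^ 3"
      by (rule final_alg[OF k(2) kR' CB0 CA0 hB e1 e2])
    then show "norm (c t k - (g0 q t / (2 * \<i>)) / k
                  - (g1 q t / 4 - (\<i> * g0 q t / 2) * (complex_of_real lam / 2) *
                       integral {0..t} (\<lambda>\<tau>. cnj (g0 q \<tau>) * g1 q \<tau> - g0 q \<tau> * cnj (g1 q \<tau>)))
                    / k\<^sup>2)
           \<le> 2 * (CA + norm BB * norm D + (norm A + norm BB) * CB) / norm k ^ 3"
      unfolding c_def A_def BB_def I_def .
  qed
qed


end
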